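(* Consider the Regularized Composite Tensor Method $x_0\in\operatorname{dom}h$, $x_{k+1}=T_H(x_k)$, $k\ge0$, with $H\ge pL_p$, and assume $F=f+h$ is uniformly convex of degree $q\ge2$ with constant $\sigma_q>0$. For $k\ge0$ let $$F'(x_{k+1})=\nabla f(x_{k+1})-\nabla\Omega_p(f,x_k;x_{k+1})-\frac{H}{p!}\|x_{k+1}-x_k\|^{p-1}B(x_{k+1}-x_k).$$ Then for every $k\ge0$, $$\eta(x_{k+1})\le\|F'(x_{k+1})\|_*\le\frac{L_p+H}{p!}\Big[\frac{1}{\sigma_q}\,\eta(x_k)\Big]^{\frac{p}{q-1}}.$$
   Context: $\mathbb{E}$ is a finite-dimensional real vector space with dual $\mathbb{E}^*$; $B:\mathbb{E}\to\mathbb{E}^*$ is a fixed self-adjoint positive-definite operator, $\|x\|=\langle Bx,x\rangle^{1/2}$, $\|g\|_*=\langle g,B^{-1}g\rangle^{1/2}$. Let $p\ge 2$ be an integer, $h:\mathbb{E}\to\mathbb{R}\cup\{+\infty\}$ proper closed convex, and $f$ convex and $p$ times differentiable on an open convex set containing $\operatorname{dom}h$, with $\|D^pf(x)-D^pf(y)\|\le L_p\|x-y\|$ for $x,y\in\operatorname{dom}h$, $0<L_p<\infty$, where for a symmetric $p$-linear form $\|A\|=\max_{\|u\|\le1}|A[u]^p|$. $F=f+h$. Taylor polynomial $\Omega_p(f,x;y)=f(x)+\sum_{k=1}^p\frac1{k!}D^kf(x)[y-x]^k$, with gradient in $y$: $\nabla\Omega_p(f,x;y)=\sum_{k=1}^p\frac1{(k-1)!}D^kf(x)[y-x]^{k-1}$.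 For $x\in\operatorname{dom}h$, $T_H(x)=\arg\min_{y\in\mathbb{E}}\{\Omega_p(f,x;y)+\frac{H}{(p+1)!}\|y-x\|^{p+1}+h(y)\}$. Uniform convexity of degree $q$ with constant $\sigma_q$: $\langle G_x-G_y,x-y\rangle\ge\sigma_q\|x-y\|^q$ for all $x,y\in\operatorname{dom}h$, $G_x\in\partial F(x)$, $G_y\in\partial F(y)$. For $x\in\operatorname{dom}h$, $\eta(x)=\min_{g\in\partial h(x)}\|\nabla f(x)+g\|_*$, with $\eta(x)=+\infty$ if $\partial h(x)=\emptyset$. *)

theory Defs
  imports "HOL-Analysis.Analysis"
begin

text \<open>The space E is modelled by a type of class euclidean_space; the dual space
is identified with E via the standard inner product, so B is a linear map on E.\<close>

definition bnorm :: "('a::euclidean_space \<Rightarrow> 'a) \<Rightarrow> 'a \<Rightarrow> real" where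
  "bnorm B x = sqrt (B x \<bullet> x)"

definition dnorm :: "('a::euclidean_space \<Rightarrow> 'a) \<Rightarrow> 'a \<Rightarrow> real" where
  "dnorm B g = sqrt (g \<bullet> inv B g)"

text \<open>k-th Frechet derivative as a k-linear form on lists of directions:
  kderiv (Suc k) f x (v # us) = D (D^k f(.)[us]) (x) [v].\<close>
fun kderiv :: "nat \<Rightarrow> ('a::euclidean_space \<Rightarrow> real) \<Rightarrow> 'a \<Rightarrow> 'a list \<Rightarrow> real" where
  "kderiv 0 f x us = f x"
| "kderiv (Suc k) f x us = frechet_derivative (\<lambda>y. kderiv k f y (tl us)) (at x) (hd us)"

definition ktimes_differentiable_on :: "nat \<Rightarrow> ('a::euclidean_space \<Rightarrow> real) \<Rightarrow> 'a set \<Rightarrow> bool" where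
  "ktimes_differentiable_on p f U \<longleftrightarrow>
     (\<forall>k<p. \<forall>x\<in>U. \<forall>us. length us = k \<longrightarrow> (\<lambda>y. kderiv k f y us) differentiable (at x))"

definition tnorm :: "('a::euclidean_space \<Rightarrow> 'a) \<Rightarrow> nat \<Rightarrow> ('a list \<Rightarrow> real) \<Rightarrow> real" where
  "tnorm B p A = Sup {\<bar>A (replicate p u)\<bar> | u. bnorm B u \<le> 1}"

definition dualvec :: "('a::euclidean_space \<Rightarrow> real) \<Rightarrow> 'a" where
  "dualvec L = (\<Sum>b\<in>Basis. L b *\<^sub>R b)"

definition grad :: "('a::euclidean_space \<Rightarrow> real) \<Rightarrow> 'a \<Rightarrow> 'a" where
  "grad f x = dualvec (frechet_derivative f (at x))"

definition taylor :: "nat \<Rightarrow> ('a::euclidean_space \<Rightarrow> real) \<Rightarrow> 'a \<Rightarrow> 'a \<Rightarrow> real" where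
  "taylor p f x y = f x + (\<Sum>k=1..p. kderiv k f x (replicate k (y - x)) / fact k)"

definition taylor_grad :: "nat \<Rightarrow> ('a::euclidean_space \<Rightarrow> real) \<Rightarrow> 'a \<Rightarrow> 'a \<Rightarrow> 'a" where
  "taylor_grad p f x y =
     dualvec (\<lambda>v. \<Sum>k=1..p. kderiv k f x (v # replicate (k - 1) (y - x)) / fact (k - 1))"

definition edom :: "('a \<Rightarrow> ereal) \<Rightarrow> 'a set" where
  "edom h = {x. h x < \<infinity>}"

definition proper_fun :: "('a \<Rightarrow> ereal) \<Rightarrow> bool" where
  "proper_fun h \<longleftrightarrow> (\<exists>x. h x < \<infinity>) \<and> (\<forall>x. h x > -\<infinity>)"

definition closed_fun :: "('a::topological_space \<Rightarrow> ereal) \<Rightarrow> bool" where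
  "closed_fun h \<longleftrightarrow> closed {(x, t::real). h x \<le> ereal t}"

definition convex_fun :: "('a::real_vector \<Rightarrow> ereal) \<Rightarrow> bool" where
  "convex_fun h \<longleftrightarrow> convex {(x, t::real). h x \<le> ereal t}"

definition subdiff :: "('a::euclidean_space \<Rightarrow> ereal) \<Rightarrow> 'a \<Rightarrow> 'a set" where
  "subdiff \<phi> x = {g. \<phi> x < \<infinity> \<and> (\<forall>y. \<phi> x + ereal (g \<bullet> (y - x)) \<le> \<phi> y)}"

definition compfun :: "('a \<Rightarrow> real) \<Rightarrow> ('a \<Rightarrow> ereal) \<Rightarrow> 'a \<Rightarrow> ereal" where
  "compfun f h y = (if h y = \<infinity> then \<infinity> else ereal (f y) + h y)"

text \<open>Regularized model whose minimizer is T_H(x).\<close>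
definition tmodel :: "('a::euclidean_space \<Rightarrow> 'a) \<Rightarrow> nat \<Rightarrow> real \<Rightarrow> ('a \<Rightarrow> real) \<Rightarrow> ('a \<Rightarrow> ereal) \<Rightarrow> 'a \<Rightarrow> 'a \<Rightarrow> ereal" where
  "tmodel B p H f h x y =
     ereal (taylor p f x y + H / fact (p + 1) * bnorm B (y - x) ^ (p + 1)) + h y"

definition eta :: "('a::euclidean_space \<Rightarrow> 'a) \<Rightarrow> ('a \<Rightarrow> real) \<Rightarrow> ('a \<Rightarrow> ereal) \<Rightarrow> 'a \<Rightarrow> ereal" where
  "eta B f h x = (if subdiff h x = {} then \<infinity>
                  else ereal (Inf {dnorm B (grad f x + g) | g. g \<in> subdiff h x}))"

end

theory Submission
  imports Defs "HOL-Computational_Algebra.Polynomial"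
begin

definition mlin :: "nat \<Rightarrow> ('a::real_vector list \<Rightarrow> real) \<Rightarrow> bool" where
  "mlin n A \<longleftrightarrow> (\<forall>xs ys. length xs + Suc (length ys) = n \<longrightarrow> linear (\<lambda>u. A (xs @ u # ys)))"

definition msym :: "nat \<Rightarrow> ('a list \<Rightarrow> real) \<Rightarrow> bool" where
  "msym n A \<longleftrightarrow> (\<forall>us vs. length us = n \<longrightarrow> mset vs = mset us \<longrightarrow> A vs = A us)"

lemma mlinD:
  assumes "mlin n A" "length xs + Suc (length ys) = n"
  shows "A (xs @ (u + v) # ys) = A (xs @ u # ys) + A (xs @ v # ys)"
    "A (xs @ (c *\<^sub>R u) # ys) = c * A (xs @ u # ys)"
proof -
  have l: "linear (\<lambda>u. A (xs @ u # ys))" using assms unfolding mlin_def by blast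
  show "A (xs @ (u + v) # ys) = A (xs @ u # ys) + A (xs @ v # ys)"
    using linear_add[OF l] by simp
  show "A (xs @ (c *\<^sub>R u) # ys) = c * A (xs @ u # ys)"
    using linear_scale[OF l] by simp
qed

lemma msymD:
  assumes "msym n A" "length us = n" "mset vs = mset us"
  shows "A vs = A us"
  using assms unfolding msym_def by blast

lemma mpoly_expand:
  fixes A :: "'a::real_vector list \<Rightarrow> real"
  assumes ml: "mlin n A" and ms: "msym n A"
  shows "length R + m = n \<Longrightarrow> \<exists>P. degree P \<le> m \<and> (\<forall>t. A (replicate m (w + t *\<^sub>R d) @ R) = poly P t)
     \<and> coeff P m = A (replicate m d @ R) \<and> coeff P 0 = A (replicate m w @ R)
     \<and> coeff P 1 = of_nat m * A (d # replicate (m-1) w @ R)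
     \<and> (m \<ge> 1 \<longrightarrow> coeff P (m-1) = of_nat m * A (w # replicate (m-1) d @ R))"
proof (induction m arbitrary: R)
  case 0
  show ?case by (rule exI[of _ "[:A R:]"]) simp
next
  case (Suc m)
  from Suc.IH[of "w # R"] Suc.prems obtain P1 where P1: "degree P1 \<le> m"
    "\<forall>t. A (replicate m (w + t *\<^sub>R d) @ w # R) = poly P1 t"
    "coeff P1 m = A (replicate m d @ w # R)" "coeff P1 0 = A (replicate m w @ w # R)"
    "coeff P1 1 = of_nat m * A (d # replicate (m-1) w @ w # R)"
    "m \<ge> 1 \<longrightarrow> coeff P1 (m-1) = of_nat m * A (w # replicate (m-1) d @ w # R)" by auto
  from Suc.IH[of "d # R"] Suc.prems obtain P2 where P2: "degree P2 \<le> m"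
    "\<forall>t. A (replicate m (w + t *\<^sub>R d) @ d # R) = poly P2 t"
    "coeff P2 m = A (replicate m d @ d # R)" "coeff P2 0 = A (replicate m w @ d # R)"
    "coeff P2 1 = of_nat m * A (d # replicate (m-1) w @ d # R)"
    "m \<ge> 1 \<longrightarrow> coeff P2 (m-1) = of_nat m * A (w # replicate (m-1) d @ d # R)" by auto
  have len: "length (replicate m (w + t *\<^sub>R d)) + Suc (length R) = n" for t using Suc.prems by simp
  let ?P = "P1 + pCons 0 P2"
  have rep: "replicate (Suc m) x @ R = replicate m x @ x # R" for x :: 'a
    by (simp add: replicate_app_Cons_same)
  have ev: "A (replicate (Suc m) (w + t *\<^sub>R d) @ R) = poly ?P t" for t
  proof -
    have "A (replicate (Suc m) (w + t *\<^sub>R d) @ R) = A (replicate m (w + t *\<^sub>R d) @ (w + t *\<^sub>R d) # R)"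
      by (simp only: rep)
    also have "\<dots> = A (replicate m (w + t *\<^sub>R d) @ w # R) + t * A (replicate m (w + t *\<^sub>R d) @ d # R)"
      using mlinD[OF ml len[of t]] by simp
    also have "\<dots> = poly ?P t" using P1(2) P2(2) by simp
    finally show ?thesis .
  qed
  have deg: "degree ?P \<le> Suc m"
    by (meson P1(1) P2(1) degree_add_le degree_pCons_le le_SucI le_trans Suc_le_mono)
  have lenS: "length (w # replicate m d @ R) = n" "length (d # replicate m w @ R) = n"
    using Suc.prems by auto
  have c1: "coeff ?P (Suc m) = A (replicate (Suc m) d @ R)"
  proof -
    have "coeff P1 (Suc m) = 0" using P1(1) by (simp add: coeff_eq_0)
    then have "coeff ?P (Suc m) = coeff P2 m" by simp
    also have "\<dots> = A (replicate m d @ d # R)" by (rule P2(3))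
    also have "\<dots> = A (replicate (Suc m) d @ R)" by (simp only: rep)
    finally show ?thesis .
  qed
  have c2: "coeff ?P 0 = A (replicate (Suc m) w @ R)"
  proof -
    have "coeff ?P 0 = coeff P1 0" by simp
    also have "\<dots> = A (replicate m w @ w # R)" by (rule P1(4))
    also have "\<dots> = A (replicate (Suc m) w @ R)" by (simp only: rep)
    finally show ?thesis .
  qed
  have c3: "coeff ?P 1 = of_nat (Suc m) * A (d # replicate (Suc m - 1) w @ R)"
  proof -
    have "coeff ?P 1 = coeff P1 1 + coeff P2 0" by (simp add: coeff_pCons)
    also have "coeff P2 0 = A (d # replicate m w @ R)"
    proof -
      have "mset (replicate m w @ d # R) = mset (d # replicate m w @ R)" by simp
      from msymD[OF ms lenS(2) this] show ?thesis using P2(4) by simp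
    qed
    also have "coeff P1 1 = of_nat m * A (d # replicate m w @ R)"
    proof (cases m)
      case 0 then show ?thesis using P1(5) by simp
    next
      case (Suc m')
      have "mset (d # replicate (m-1) w @ w # R) = mset (d # replicate m w @ R)"
        using Suc by simp
      from msymD[OF ms lenS(2) this] show ?thesis using P1(5) by simp
    qed
    finally show ?thesis by (simp add: algebra_simps)
  qed
  have c4: "coeff ?P (Suc m - 1) = of_nat (Suc m) * A (w # replicate (Suc m - 1) d @ R)"
  proof (cases m)
    case 0
    then show ?thesis using P1(4) by (simp add: coeff_pCons)
  next
    case (Suc m')
    have "coeff ?P m = coeff P1 m + coeff P2 m'" using Suc by (simp add: coeff_pCons)
    also have "coeff P1 m = A (w # replicate m d @ R)"
    proof -
      have "mset (replicate m d @ w # R) = mset (w # replicate m d @ R)" by simp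
      from msymD[OF ms lenS(1) this] show ?thesis using P1(3) by simp
    qed
    also have "coeff P2 m' = of_nat m * A (w # replicate m d @ R)"
    proof -
      have "mset (w # replicate (m-1) d @ d # R) = mset (w # replicate m d @ R)"
        using Suc by simp
      from msymD[OF ms lenS(1) this] show ?thesis using P2(6) Suc by simp
    qed
    finally show ?thesis by (simp add: algebra_simps)
  qed
  show ?case using deg ev c1 c2 c3 c4 by blast
qed


lemma mpoly_expand0:
  fixes A :: "'a::real_vector list \<Rightarrow> real"
  assumes ml: "mlin n A" and ms: "msym n A"
  shows "\<exists>P. degree P \<le> n \<and> (\<forall>t. A (replicate n (w + t *\<^sub>R d)) = poly P t)
     \<and> coeff P n = A (replicate n d) \<and> coeff P 0 = A (replicate n w)
     \<and> coeff P 1 = of_nat n * A (d # replicate (n-1) w)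
     \<and> (n \<ge> 1 \<longrightarrow> coeff P (n-1) = of_nat n * A (w # replicate (n-1) d))"
  using mpoly_expand[OF ml ms, of "[]" n w d] by (simp only: append_Nil2 list.size(3) add_0)

lemma re_poly: "poly (map_poly Re P) t = Re (poly P (of_real t))"
proof (induction P)
  case 0 then show ?case by simp
next
  case (pCons a P)
  have "map_poly Re (pCons a P) = pCons (Re a) (map_poly Re P)"
    by (simp add: map_poly_pCons)
  then show ?case using pCons by simp
qed

lemma cot_decr:
  assumes "0 < a" "a < b" "b < pi"
  shows "cos b / sin b < cos a / sin a"
proof -
  have sa: "sin a > 0" using assms by (intro sin_gt_zero) auto
  have sb: "sin b > 0" using assms by (intro sin_gt_zero) auto
  have "sin (b - a) > 0" using assms by (intro sin_gt_zero) auto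
  then have "cos b * sin a < cos a * sin b" by (simp add: sin_diff algebra_simps)
  then show ?thesis using sa sb by (simp add: field_simps)
qed

lemma banach2:
  fixes A :: "'a::real_vector list \<Rightarrow> real"
  assumes ml: "mlin p A" and ms: "msym p A" and p2: "p \<ge> 2"
    and Mb: "\<And>t. \<bar>A (replicate p (w + t *\<^sub>R d))\<bar> \<le> M * sqrt (1 + t\<^sup>2) ^ p"
    and Md: "\<bar>A (replicate p d)\<bar> \<le> M"
  shows "(A (replicate p d))\<^sup>2 + (A (w # replicate (p-1) d))\<^sup>2 \<le> M\<^sup>2"
proof (rule ccontr)
  define a where "a = A (replicate p d)"
  define b where "b = A (w # replicate (p-1) d)"
  assume "\<not> ?thesis"
  then have gt: "a\<^sup>2 + b\<^sup>2 > M\<^sup>2" unfolding a_def b_def by simp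
  have M0: "M \<ge> 0" using Md by simp
  obtain P where P: "degree P \<le> p" "\<forall>t. A (replicate p (w + t *\<^sub>R d)) = poly P t"
    "coeff P p = a" "coeff P (p-1) = of_nat p * b"
  proof -
    have p1: "1 \<le> p" using p2 by simp
    show ?thesis using mpoly_expand0[OF ml ms, of w d] p1 that unfolding a_def b_def by blast
  qed
  define K where "K = sqrt (a\<^sup>2 + b\<^sup>2)"
  have KM: "K > M"
    unfolding K_def using gt by (simp add: real_less_rsqrt)
  have b0: "b \<noteq> 0"
  proof
    assume "b = 0"
    then have "a\<^sup>2 > M\<^sup>2" using gt by simp
    moreover have "\<bar>a\<bar> \<le> M" using Md a_def by simp
    moreover have "a\<^sup>2 \<le> M\<^sup>2" using power_mono[OF \<open>\<bar>a\<bar> \<le> M\<close> abs_ge_zero, of 2] by simp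
    ultimately show False by linarith
  qed
  have K0: "K > 0" unfolding K_def using b0 by (simp add: sum_power2_gt_zero_iff)
  have KK: "(a/K)\<^sup>2 + (b/K)\<^sup>2 = 1"
  proof -
    have K2: "K\<^sup>2 = a\<^sup>2 + b\<^sup>2" unfolding K_def by simp
    show ?thesis using K0 by (simp add: power_divide add_divide_distrib[symmetric] K2[symmetric])
  qed
  obtain \<beta> where be: "-pi < \<beta>" "\<beta> < pi" "\<beta> \<noteq> 0" "cos \<beta> = a/K" "sin \<beta> = b/K"
  proof (cases "b > 0")
    case True
    have h1: "0 \<le> b/K" using True K0 by simp
    obtain t where t: "0 \<le> t" "t \<le> pi" "a/K = cos t" "b/K = sin t"
      using sincos_total_pi[OF h1, of "a/K"] KK by (auto simp: add.commute)
    have "t \<noteq> 0" "t \<noteq> pi" using t True K0 by auto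
    then show ?thesis using that[of t] t by auto
  next
    case False
    then have bn: "b < 0" using b0 by simp
    have h1: "0 \<le> -b/K" using bn K0 by (simp add: divide_nonpos_pos)
    have h2: "(a/K)\<^sup>2 + (-b/K)\<^sup>2 = 1" using KK by simp
    obtain t where t: "0 \<le> t" "t \<le> pi" "a/K = cos t" "-b/K = sin t"
      using sincos_total_pi[OF h1, of "a/K"] h2 by (auto simp: add.commute)
    have "t \<noteq> 0" "t \<noteq> pi" using t bn K0 by auto
    then show ?thesis using that[of "-t"] t by auto
  qed
  define j0 :: nat where "j0 = (if \<beta> > 0 then 0 else 1)"
  define \<phi> where "\<phi> j = (\<beta> + real j * pi) / real p" for j :: nat
  define tt where "tt j = cos (\<phi> j) / sin (\<phi> j)" for j
  define I where "I = {j0..<j0+p}"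
  have p0: "real p > 0" using p2 by simp
  have phir: "0 < \<phi> j \<and> \<phi> j < pi" if "j \<in> I" for j
  proof -
    have "0 < \<beta> + real j * pi \<and> \<beta> + real j * pi < real p * pi"
    proof (cases "\<beta> > 0")
      case True
      then have "j \<le> p - 1" "j0 = 0" using that unfolding I_def j0_def by auto
      then have "real j \<le> real p - 1" using p2 by linarith
      then have "real j * pi \<le> (real p - 1) * pi" by (simp add: mult_right_mono)
      then show ?thesis using True be by (simp add: algebra_simps) (smt (verit) pi_gt_zero mult_nonneg_nonneg of_nat_0_le_iff)
    next
      case False
      then have j: "1 \<le> j" "j \<le> p" using that unfolding I_def j0_def by auto
      then have "real j * pi \<le> real p * pi" "pi \<le> real j * pi" by (simp_all add: mult_right_mono)
      then show ?thesis using False be by linarith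
    qed
    then show ?thesis unfolding \<phi>_def using p0 by (simp add: field_simps)
  qed
  have sinpos: "sin (\<phi> j) > 0" if "j \<in> I" for j using phir[OF that] by (intro sin_gt_zero) auto
  define c where "c = Complex a (-b)"
  have c_eq: "c = complex_of_real K * cis (-\<beta>)"
    using K0 be unfolding c_def by (simp add: complex_eq_iff cis.sel field_simps)
  define S where "S = map_poly Re (smult c ([:\<i>, 1:] ^ p))"
  have polyS: "poly S t = Re (c * (of_real t + \<i>) ^ p)" for t
    unfolding S_def re_poly by (simp add: poly_power algebra_simps)
  have Sj: "poly S (tt j) = K * (-1)^j / sin (\<phi> j) ^ p" if "j \<in> I" for j
  proof -
    have s0: "sin (\<phi> j) \<noteq> 0" using sinpos[OF that] by simp
    have e1: "complex_of_real (tt j) + \<i> = cis (\<phi> j) / complex_of_real (sin (\<phi> j))"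
      using s0 unfolding tt_def by (simp add: complex_eq_iff cis.sel field_simps)
    have e2: "real p * \<phi> j = \<beta> + real j * pi" unfolding \<phi>_def using p0 by simp
    have "c * (of_real (tt j) + \<i>) ^ p
        = complex_of_real K * (cis (-\<beta>) * cis (real p * \<phi> j)) / complex_of_real (sin (\<phi> j) ^ p)"
      unfolding e1 c_eq by (simp add: power_divide Complex.DeMoivre)
    also have "cis (-\<beta>) * cis (real p * \<phi> j) = cis (real j * pi)" unfolding cis_mult e2 by simp
    also have "cis (real j * pi) = (-1)^j" by (simp add: complex_eq_iff cis.sel cos_npi sin_npi)
    finally have "c * (of_real (tt j) + \<i>) ^ p = complex_of_real (K * (-1)^j / sin (\<phi> j) ^ p)"
      by simp
    then show ?thesis unfolding polyS by simp
  qed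
  have sq: "sqrt (1 + (tt j)\<^sup>2) ^ p = 1 / sin (\<phi> j) ^ p" if "j \<in> I" for j
  proof -
    have s: "sin (\<phi> j) > 0" using sinpos[OF that] .
    have "1 + (tt j)\<^sup>2 = (1 / sin (\<phi> j))\<^sup>2"
      unfolding tt_def using s sin_cos_squared_add[of "\<phi> j"] by (simp add: field_simps power2_eq_square)
    then have "sqrt (1 + (tt j)\<^sup>2) = 1 / sin (\<phi> j)" using s by simp
    then show ?thesis by (simp add: power_divide)
  qed
  define D where "D = S - P"
  have cS: "coeff S k = Re (c * of_nat (p choose k) * \<i> ^ (p - k))" if "k \<le> p" for k
    unfolding S_def using that by (simp add: coeff_map_poly coeff_linear_poly_power)
  have degS: "degree S \<le> p"
  proof -
    have "degree S \<le> degree (smult c ([:\<i>, 1:] ^ p))" unfolding S_def by (rule map_poly_degree_leq)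
    also have "\<dots> \<le> degree ([:\<i>, 1:] ^ p)" by simp
    also have "\<dots> \<le> p" using degree_power_le[of "[:\<i>, 1:]" p] by simp
    finally show ?thesis .
  qed
  have cSp: "coeff S p = a" using cS[of p] unfolding c_def by simp
  have cSp1: "coeff S (p-1) = of_nat p * b"
  proof -
    have "p choose (p-1) = p" using binomial_symmetric[of "p-1" p] p2 by simp
    moreover have "p - (p - 1) = 1" using p2 by simp
    ultimately show ?thesis using cS[of "p-1"] unfolding c_def by simp
  qed
  have degD: "degree D \<le> p - 2"
  proof (rule degree_le, intro allI impI)
    fix i assume i: "p - 2 < i"
    show "coeff D i = 0"
    proof -
      consider "i = p - 1" | "i = p" | "i > p" using i p2 by linarith
      then show ?thesis
      proof cases
        case 1 then show ?thesis unfolding D_def using cSp1 P(4) by simp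
      next
        case 2 then show ?thesis unfolding D_def using cSp P(3) by simp
      next
        case 3 then show ?thesis unfolding D_def using degS P(1) by (simp add: coeff_eq_0)
      qed
    qed
  qed
  have sgn: "(-1)^j * poly D (tt j) > 0" if "j \<in> I" for j
  proof -
    have s: "sin (\<phi> j) ^ p > 0" using sinpos[OF that] by simp
    have "\<bar>poly P (tt j)\<bar> \<le> M / sin (\<phi> j) ^ p" using Mb[of "tt j"] P(2) sq[OF that] by simp
    also have "\<dots> < K / sin (\<phi> j) ^ p" using KM s by (simp add: divide_strict_right_mono)
    finally have lt: "\<bar>poly P (tt j)\<bar> < K / sin (\<phi> j) ^ p" .
    have "(-1)^j * poly D (tt j) = K / sin (\<phi> j) ^ p - (-1)^j * poly P (tt j)"
      unfolding D_def using Sj[OF that] by (simp add: algebra_simps)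
    moreover have "(-1)^j * poly P (tt j) \<le> \<bar>poly P (tt j)\<bar>"
      by (cases "even j") auto
    ultimately show ?thesis using lt by linarith
  qed
  have ttmono: "tt j' < tt j" if "j \<in> I" "j' \<in> I" "j < j'" for j j'
  proof -
    have "\<phi> j < \<phi> j'" unfolding \<phi>_def using that(3) p0 by (simp add: divide_strict_right_mono)
    then show ?thesis unfolding tt_def using phir[OF that(1)] phir[OF that(2)] by (intro cot_decr) auto
  qed
  define I' where "I' = {j0..<j0+p-1}"
  have rootex: "\<exists>r. tt (Suc j) < r \<and> r < tt j \<and> poly D r = 0" if "j \<in> I'" for j
  proof -
    have jI: "j \<in> I" "Suc j \<in> I" using that p2 unfolding I_def I'_def by auto
    have "poly D (tt (Suc j)) * poly D (tt j) < 0"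
    proof -
      have n: "(-1)^j * poly D (tt (Suc j)) < 0" using sgn[OF jI(2)] by simp
      have q: "0 < (-1)^j * poly D (tt j)" using sgn[OF jI(1)] .
      have "((-1)^j * poly D (tt (Suc j))) * ((-1)^j * poly D (tt j)) < 0" using mult_neg_pos[OF n q] .
      moreover have "((-1)^j * poly D (tt (Suc j))) * ((-1)^j * poly D (tt j)) = poly D (tt (Suc j)) * poly D (tt j)"
        by (cases "even j") auto
      ultimately show ?thesis by simp
    qed
    then show ?thesis using poly_IVT[OF ttmono[OF jI(1) jI(2)]] by auto
  qed
  then obtain rr where rr: "\<And>j. j \<in> I' \<Longrightarrow> tt (Suc j) < rr j \<and> rr j < tt j \<and> poly D (rr j) = 0"
    by metis
  have D0: "D = 0"
  proof (rule ccontr)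
    assume nz: "D \<noteq> 0"
    have inj: "inj_on rr I'"
    proof (rule inj_onI)
      fix j j' assume j: "j \<in> I'" "j' \<in> I'" "rr j = rr j'"
      show "j = j'"
      proof (rule ccontr)
        assume "j \<noteq> j'"
        then consider "j < j'" | "j' < j" by linarith
        then show False
        proof cases
          case 1
          have "tt j' \<le> tt (Suc j)"
          proof (cases "Suc j = j'")
            case False
            then have "Suc j < j'" using 1 by simp
            moreover have "Suc j \<in> I" "j' \<in> I" using j p2 1 unfolding I_def I'_def by auto
            ultimately show ?thesis using ttmono by fastforce
          qed simp
          then show False using rr[OF j(1)] rr[OF j(2)] j(3) by linarith
        next
          case 2
          have "tt j \<le> tt (Suc j')"
          proof (cases "Suc j' = j")
            case False
            then have "Suc j' < j" using 2 by simp
            moreover have "Suc j' \<in> I" "j \<in> I" using j p2 2 unfolding I_def I'_def by auto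
            ultimately show ?thesis using ttmono by fastforce
          qed simp
          then show False using rr[OF j(1)] rr[OF j(2)] j(3) by linarith
        qed
      qed
    qed
    have "rr ` I' \<subseteq> {x. poly D x = 0}" using rr by auto
    then have "card (rr ` I') \<le> card {x. poly D x = 0}"
      using poly_roots_finite[OF nz] by (intro card_mono) auto
    also have "\<dots> \<le> degree D" using card_poly_roots_bound[OF nz] .
    finally have "card I' \<le> p - 2" using degD card_image[OF inj] by simp
    then show False unfolding I'_def using p2 by simp
  qed
  have j0I: "j0 \<in> I" unfolding I_def using p2 by simp
  have "poly P (tt j0) = poly S (tt j0)" using D0 unfolding D_def by simp
  then have "\<bar>poly P (tt j0)\<bar> = K / sin (\<phi> j0) ^ p"
    using Sj[OF j0I] K0 sinpos[OF j0I] by (simp add: abs_mult)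
  moreover have "\<bar>poly P (tt j0)\<bar> \<le> M / sin (\<phi> j0) ^ p" using Mb[of "tt j0"] P(2) sq[OF j0I] by simp
  ultimately have "K \<le> M" using sinpos[OF j0I] by (simp add: divide_le_cancel)
  then show False using KM by simp
qed

lemma line_deriv:
  fixes g :: "'a::real_normed_vector \<Rightarrow> real"
  assumes "(g has_derivative G') (at (a + s *\<^sub>R u))"
  shows "((\<lambda>s. g (a + s *\<^sub>R u)) has_real_derivative G' u) (at s)"
proof -
  have l: "((\<lambda>s. a + s *\<^sub>R u) has_derivative (\<lambda>t. t *\<^sub>R u)) (at s)"
    by (auto intro!: derivative_eq_intros)
  have bl: "bounded_linear G'" using assms by (rule has_derivative_bounded_linear)
  have "((\<lambda>s. g (a + s *\<^sub>R u)) has_derivative (\<lambda>t. G' (t *\<^sub>R u))) (at s)"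
    using has_derivative_compose[OF l assms] by simp
  moreover have "(\<lambda>t. G' (t *\<^sub>R u)) = (*) (G' u)"
    using linear_scale[OF bounded_linear.linear[OF bl]] by (auto simp: fun_eq_iff)
  ultimately show ?thesis unfolding has_field_derivative_def by simp
qed

lemma schwarz:
  fixes g :: "'a::real_normed_vector \<Rightarrow> real"
  assumes U: "open U" "z \<in> U"
    and gd: "\<And>y. y \<in> U \<Longrightarrow> (g has_derivative G y) (at y)"
    and Gd: "\<And>w. ((\<lambda>y. G y w) has_derivative H w) (at z)"
  shows "H u v = H v u"
proof -
  have key: "\<exists>\<delta>>0. \<forall>h. 0 < h \<and> h < \<delta> \<longrightarrow>
      \<bar>g (z + h *\<^sub>R v + h *\<^sub>R u) - g (z + h *\<^sub>R u) - g (z + h *\<^sub>R v) + g z - h\<^sup>2 * H u v\<bar> \<le> e * h\<^sup>2"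
    if e: "e > 0" for u v e
  proof -
    obtain r where r: "r > 0" "ball z r \<subseteq> U" using U open_contains_ball by blast
    define N where "N = norm u + norm v + 1"
    have N: "N \<ge> 1" unfolding N_def by simp
    define e' where "e' = e / (2 * N)"
    have e': "e' > 0" unfolding e'_def using e N by simp
    have Hl: "linear (H u)" using Gd[of u] has_derivative_bounded_linear bounded_linear.linear by blast
    obtain d1 where d1: "d1 > 0" "\<And>y. norm (y - z) < d1 \<Longrightarrow>
        \<bar>G y u - G z u - H u (y - z)\<bar> \<le> e' * norm (y - z)"
      using Gd[of u] e' unfolding has_derivative_at_alt by (metis real_norm_def)
    define \<delta> where "\<delta> = min d1 r / N"
    have \<delta>: "\<delta> > 0" unfolding \<delta>_def using d1 r N by simp
    show ?thesis
    proof (intro exI[of _ \<delta>] conjI allI impI \<delta>)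
      fix h assume h: "0 < h \<and> h < \<delta>"
      have hN: "h * N < min d1 r" using h N unfolding \<delta>_def by (simp add: field_simps)
      have nb: "norm (s *\<^sub>R u + t *\<^sub>R v) < h * N" if "0 \<le> s" "s \<le> h" "0 \<le> t" "t \<le> h" for s t
      proof -
        have "norm (s *\<^sub>R u + t *\<^sub>R v) \<le> s * norm u + t * norm v"
          using norm_triangle_ineq[of "s *\<^sub>R u" "t *\<^sub>R v"] that by simp
        also have "\<dots> \<le> h * norm u + h * norm v" using that by (intro add_mono mult_right_mono) auto
        also have "\<dots> < h * N" using h unfolding N_def by (simp add: algebra_simps)
        finally show ?thesis .
      qed
      define y1 where "y1 s = (z + h *\<^sub>R v) + s *\<^sub>R u" for s
      define y2 where "y2 s = z + s *\<^sub>R u" for s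
      have y1n: "norm (y1 s - z) < h * N" if "0 \<le> s" "s \<le> h" for s
        using nb[of s h] that h unfolding y1_def by (simp add: algebra_simps)
      have y2n: "norm (y2 s - z) < h * N" if "0 \<le> s" "s \<le> h" for s
        using nb[of s 0] that h unfolding y2_def by simp
      have inU: "y1 s \<in> U" "y2 s \<in> U" if "0 \<le> s" "s \<le> h" for s
        using y1n[OF that] y2n[OF that] hN r(2) by (auto simp: dist_norm norm_minus_commute)
      define \<phi> where "\<phi> s = g (y1 s) - g (y2 s)" for s
      have dphi: "(\<phi> has_real_derivative (G (y1 s) u - G (y2 s) u)) (at s)" if "0 \<le> s" "s \<le> h" for s
      proof -
        have a: "((\<lambda>s. g (z + h *\<^sub>R v + s *\<^sub>R u)) has_real_derivative G (y1 s) u) (at s)"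
          unfolding y1_def by (rule line_deriv) (use gd[OF inU(1)[OF that]] in \<open>simp add: y1_def\<close>)
        have b: "((\<lambda>s. g (z + s *\<^sub>R u)) has_real_derivative G (y2 s) u) (at s)"
          unfolding y2_def by (rule line_deriv) (use gd[OF inU(2)[OF that]] in \<open>simp add: y2_def\<close>)
        show ?thesis using DERIV_diff[OF a b] unfolding \<phi>_def y1_def y2_def .
      qed
      obtain \<xi> where xi: "0 < \<xi>" "\<xi> < h" "\<phi> h - \<phi> 0 = (h - 0) * (G (y1 \<xi>) u - G (y2 \<xi>) u)"
        using MVT2[of 0 h \<phi> "\<lambda>s. G (y1 s) u - G (y2 s) u"] dphi h by auto
      have phid: "\<phi> h - \<phi> 0 = g (z + h *\<^sub>R v + h *\<^sub>R u) - g (z + h *\<^sub>R u) - g (z + h *\<^sub>R v) + g z"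
        unfolding \<phi>_def y1_def y2_def by simp
      define E where "E y = G y u - G z u - H u (y - z)" for y
      have E1: "\<bar>E (y1 \<xi>)\<bar> \<le> e' * (h * N)"
      proof -
        have "\<bar>E (y1 \<xi>)\<bar> \<le> e' * norm (y1 \<xi> - z)" unfolding E_def using d1(2) y1n[of \<xi>] hN xi by auto
        also have "\<dots> \<le> e' * (h * N)" using y1n[of \<xi>] xi e'
          by (intro mult_left_mono) auto
        finally show ?thesis .
      qed
      have E2: "\<bar>E (y2 \<xi>)\<bar> \<le> e' * (h * N)"
      proof -
        have "\<bar>E (y2 \<xi>)\<bar> \<le> e' * norm (y2 \<xi> - z)" unfolding E_def using d1(2) y2n[of \<xi>] hN xi by auto
        also have "\<dots> \<le> e' * (h * N)" using y2n[of \<xi>] xi e'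
          by (intro mult_left_mono) auto
        finally show ?thesis .
      qed
      have lin3: "H u (y1 \<xi> - z) = H u (y2 \<xi> - z) + H u (y1 \<xi> - y2 \<xi>)"
      proof -
        have "H u (y1 \<xi> - z) = H u ((y2 \<xi> - z) + (y1 \<xi> - y2 \<xi>))" by (simp add: algebra_simps)
        then show ?thesis using linear_add[OF Hl, of "y2 \<xi> - z" "y1 \<xi> - y2 \<xi>"] by (simp only:)
      qed
      have "G (y1 \<xi>) u - G (y2 \<xi>) u = E (y1 \<xi>) - E (y2 \<xi>) + H u (y1 \<xi> - y2 \<xi>)"
        unfolding E_def using lin3 by (simp add: algebra_simps)
      also have "H u (y1 \<xi> - y2 \<xi>) = h * H u v"
        unfolding y1_def y2_def using linear_scale[OF Hl] by simp
      finally have "\<bar>(G (y1 \<xi>) u - G (y2 \<xi>) u) - h * H u v\<bar> \<le> 2 * e' * (h * N)"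
        using E1 E2 by simp
      also have "2 * e' * (h * N) = e * h" unfolding e'_def using N by simp
      finally have bd: "\<bar>(G (y1 \<xi>) u - G (y2 \<xi>) u) - h * H u v\<bar> \<le> e * h" .
      have "g (z + h *\<^sub>R v + h *\<^sub>R u) - g (z + h *\<^sub>R u) - g (z + h *\<^sub>R v) + g z - h\<^sup>2 * H u v
           = h * ((G (y1 \<xi>) u - G (y2 \<xi>) u) - h * H u v)"
        using xi(3) phid by (simp add: power2_eq_square algebra_simps)
      also have "\<bar>\<dots>\<bar> \<le> h * (e * h)" using bd h by (simp add: abs_mult mult_left_mono)
      finally show "\<bar>g (z + h *\<^sub>R v + h *\<^sub>R u) - g (z + h *\<^sub>R u) - g (z + h *\<^sub>R v) + g z - h\<^sup>2 * H u v\<bar> \<le> e * h\<^sup>2"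
        by (simp add: power2_eq_square algebra_simps)
    qed
  qed
  show ?thesis
  proof (rule ccontr)
    assume ne: "H u v \<noteq> H v u"
    define e where "e = \<bar>H u v - H v u\<bar> / 4"
    have e: "e > 0" unfolding e_def using ne by simp
    obtain d1 where d1: "d1 > 0" "\<And>h. 0 < h \<and> h < d1 \<Longrightarrow>
      \<bar>g (z + h *\<^sub>R v + h *\<^sub>R u) - g (z + h *\<^sub>R u) - g (z + h *\<^sub>R v) + g z - h\<^sup>2 * H u v\<bar> \<le> e * h\<^sup>2"
      using key[OF e, of v u] by blast
    obtain d2 where d2: "d2 > 0" "\<And>h. 0 < h \<and> h < d2 \<Longrightarrow>
      \<bar>g (z + h *\<^sub>R u + h *\<^sub>R v) - g (z + h *\<^sub>R v) - g (z + h *\<^sub>R u) + g z - h\<^sup>2 * H v u\<bar> \<le> e * h\<^sup>2"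
      using key[OF e, of u v] by blast
    define h where "h = min d1 d2 / 2"
    have h: "0 < h" "h < d1" "h < d2" unfolding h_def using d1 d2 by auto
    have eq: "z + h *\<^sub>R u + h *\<^sub>R v = z + h *\<^sub>R v + h *\<^sub>R u" by (simp add: algebra_simps)
    have "\<bar>h\<^sup>2 * H u v - h\<^sup>2 * H v u\<bar> \<le> 2 * e * h\<^sup>2"
      using d1(2)[of h] d2(2)[of h] h eq by simp
    moreover have "h\<^sup>2 * H u v - h\<^sup>2 * H v u = h\<^sup>2 * (H u v - H v u)" by (simp add: algebra_simps)
    ultimately have "h\<^sup>2 * \<bar>H u v - H v u\<bar> \<le> 2 * e * h\<^sup>2" by (simp add: abs_mult)
    also have "2 * e * h\<^sup>2 = h\<^sup>2 * (\<bar>H u v - H v u\<bar> / 2)" unfolding e_def by simp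
    finally have "h\<^sup>2 * \<bar>H u v - H v u\<bar> \<le> h\<^sup>2 * (\<bar>H u v - H v u\<bar> / 2)" .
    then have "\<bar>H u v - H v u\<bar> \<le> \<bar>H u v - H v u\<bar> / 2" using h by simp
    then show False using ne by simp
  qed
qed

declare kderiv.simps(2)[simp del]

lemma kd_has_deriv:
  assumes kd: "ktimes_differentiable_on p f U" and k: "k < p" and z: "z \<in> U"
    and lus: "length us = k"
  shows "((\<lambda>y. kderiv k f y us) has_derivative (\<lambda>v. kderiv (Suc k) f z (v # us))) (at z)"
proof -
  have "(\<lambda>y. kderiv k f y us) differentiable (at z)"
    using kd k z lus unfolding ktimes_differentiable_on_def by auto
  then have "((\<lambda>y. kderiv k f y us) has_derivative frechet_derivative (\<lambda>y. kderiv k f y us) (at z)) (at z)"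
    by (simp add: frechet_derivative_works)
  moreover have eq: "frechet_derivative (\<lambda>y. kderiv k f y us) (at z) = (\<lambda>v. kderiv (Suc k) f z (v # us))"
    by (rule ext) (simp add: kderiv.simps)
  ultimately show ?thesis by (simp only: eq)
qed

lemma kd_mlin:
  assumes U: "open U" and kd: "ktimes_differentiable_on p f U"
  shows "k \<le> p \<Longrightarrow> z \<in> U \<Longrightarrow> mlin k (kderiv k f z)"
proof (induction k arbitrary: z)
  case 0
  then show ?case unfolding mlin_def by simp
next
  case (Suc k)
  have kp: "k < p" using Suc.prems by simp
  show ?case unfolding mlin_def
  proof (intro allI impI)
    fix xs ys :: "'a list" assume len: "length xs + Suc (length ys) = Suc k"
    show "linear (\<lambda>u. kderiv (Suc k) f z (xs @ u # ys))"
    proof (cases xs)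
      case Nil
      have "((\<lambda>y. kderiv k f y ys) has_derivative (\<lambda>v. kderiv (Suc k) f z (v # ys))) (at z)"
        by (rule kd_has_deriv[OF kd kp Suc.prems(2)]) (use len Nil in simp)
      then have "linear (\<lambda>v. kderiv (Suc k) f z (v # ys))"
        using has_derivative_bounded_linear bounded_linear.linear by blast
      then show ?thesis using Nil by simp
    next
      case (Cons x xs')
      define g where "g u y = kderiv k f y (xs' @ u # ys)" for u y
      define D where "D u v = kderiv (Suc k) f z (v # xs' @ u # ys)" for u v
      have IH: "mlin k (kderiv k f y)" if "y \<in> U" for y using Suc.IH[of y] Suc.prems that by simp
      have lenk: "length xs' + Suc (length ys) = k" using len Cons by simp
      have hd: "(g u has_derivative D u) (at z)" for u
        unfolding g_def D_def by (rule kd_has_deriv[OF kd kp Suc.prems(2)]) (use lenk in simp)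
      have add: "D (u1 + u2) = (\<lambda>v. D u1 v + D u2 v)" for u1 u2
      proof -
        have "((\<lambda>y. g u1 y + g u2 y) has_derivative (\<lambda>v. D u1 v + D u2 v)) (at z)"
          by (rule has_derivative_add[OF hd hd])
        then have "(g (u1 + u2) has_derivative (\<lambda>v. D u1 v + D u2 v)) (at z)"
          by (rule has_derivative_transform_within_open[OF _ U Suc.prems(2)])
             (simp add: g_def mlinD(1)[OF IH lenk])
        from has_derivative_unique[OF hd[of "u1 + u2"] this] show ?thesis .
      qed
      have scl: "D (c *\<^sub>R u) = (\<lambda>v. c * D u v)" for c u
      proof -
        have "((\<lambda>y. c * g u y) has_derivative (\<lambda>v. c * D u v)) (at z)"
          by (rule has_derivative_mult_right[OF hd])
        then have "(g (c *\<^sub>R u) has_derivative (\<lambda>v. c * D u v)) (at z)"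
          by (rule has_derivative_transform_within_open[OF _ U Suc.prems(2)])
             (simp add: g_def mlinD(2)[OF IH lenk])
        from has_derivative_unique[OF hd[of "c *\<^sub>R u"] this] show ?thesis .
      qed
      show ?thesis
      proof (rule linearI)
        fix u1 u2 show "kderiv (Suc k) f z (xs @ (u1 + u2) # ys) =
            kderiv (Suc k) f z (xs @ u1 # ys) + kderiv (Suc k) f z (xs @ u2 # ys)"
          using fun_cong[OF add[of u1 u2], of x] unfolding D_def Cons by simp
      next
        fix c u show "kderiv (Suc k) f z (xs @ (c *\<^sub>R u) # ys) = c *\<^sub>R kderiv (Suc k) f z (xs @ u # ys)"
          using fun_cong[OF scl[of c u], of x] unfolding D_def Cons by simp
      qed
    qed
  qed
qed

lemma kd_sym:
  assumes U: "open U" and kd: "ktimes_differentiable_on p f U"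
  shows "k \<le> p \<Longrightarrow> z \<in> U \<Longrightarrow> msym k (kderiv k f z)"
proof (induction k arbitrary: z)
  case 0
  then show ?case unfolding msym_def by simp
next
  case (Suc k)
  have kp: "k < p" using Suc.prems by simp
  have IH: "msym k (kderiv k f y)" if "y \<in> U" for y using Suc.IH[of y] Suc.prems that by simp
  have tail: "kderiv (Suc k) f z (u # R') = kderiv (Suc k) f z (u # R)"
    if "length R = k" "mset R' = mset R" for u R R'
  proof -
    have "((\<lambda>y. kderiv k f y R) has_derivative (\<lambda>v. kderiv (Suc k) f z (v # R))) (at z)"
      by (rule kd_has_deriv[OF kd kp Suc.prems(2) that(1)])
    then have hR': "((\<lambda>y. kderiv k f y R') has_derivative (\<lambda>v. kderiv (Suc k) f z (v # R))) (at z)"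
      by (rule has_derivative_transform_within_open[OF _ U Suc.prems(2)])
         (use msymD[OF IH that(1) that(2)] in auto)
    then have "(\<lambda>v. kderiv (Suc k) f z (v # R)) = (\<lambda>v. kderiv (Suc k) f z (v # R'))"
    proof -
      have "length R' = k" using that by (metis size_mset)
      from kd_has_deriv[OF kd kp Suc.prems(2) this]
      show ?thesis using has_derivative_unique[OF hR'] by blast
    qed
    from fun_cong[OF this, of u] show ?thesis by simp
  qed
  have swap: "kderiv (Suc k) f z (u # v # R) = kderiv (Suc k) f z (v # u # R)"
    if "Suc (length R) = k" for u v R
  proof -
    define m where "m = length R"
    have k: "k = Suc m" using that m_def by simp
    have g1: "((\<lambda>y. kderiv m f y R) has_derivative (\<lambda>w. kderiv (Suc m) f y (w # R))) (at y)"
      if "y \<in> U" for y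
      by (rule kd_has_deriv[OF kd _ that]) (use kp k m_def in simp_all)
    have g2: "((\<lambda>y. kderiv (Suc m) f y (w # R)) has_derivative (\<lambda>x. kderiv (Suc (Suc m)) f z (x # w # R))) (at z)"
      for w by (rule kd_has_deriv[OF kd _ Suc.prems(2)]) (use kp k m_def in simp_all)
    have "kderiv (Suc (Suc m)) f z (v # u # R) = kderiv (Suc (Suc m)) f z (u # v # R)"
      using schwarz[OF U Suc.prems(2), where g = "\<lambda>y. kderiv m f y R"
          and G = "\<lambda>y w. kderiv (Suc m) f y (w # R)" and H = "\<lambda>w x. kderiv (Suc (Suc m)) f z (x # w # R)",
          OF g1 g2, of u v] by simp
    then show ?thesis using k by simp
  qed
  show ?case unfolding msym_def
  proof (intro allI impI)
    fix us vs :: "'a list" assume len: "length us = Suc k" and ms: "mset vs = mset us"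
    have lv: "length vs = Suc k" using len ms by (metis size_mset)
    obtain u R where us: "us = u # R" using len by (cases us) auto
    obtain v R' where vs: "vs = v # R'" using lv by (cases vs) auto
    have lR: "length R = k" using len us by simp
    show "kderiv (Suc k) f z vs = kderiv (Suc k) f z us"
    proof (cases "u = v")
      case True
      then have mR: "mset R' = mset R" using ms us vs by simp
      show ?thesis using tail[OF lR mR, of u] us vs True by simp
    next
      case False
      have "v \<in> set vs" using vs by simp
      then have "v \<in> set us" using mset_eq_setD[OF ms] by simp
      then have vR: "v \<in> set R" using us False by simp
      define W where "W = remove1 v R"
      have mW: "mset (v # W) = mset R" unfolding W_def using vR by simp
      have "R \<noteq> []" using vR by auto
      then have "length R \<ge> 1" by (cases R) auto
      moreover have "length W = length R - 1" unfolding W_def using vR by (simp add: length_remove1)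
      ultimately have lW: "Suc (length W) = k" using lR by simp
      have mR': "mset R' = mset (u # W)"
      proof -
        have "add_mset v (mset R') = add_mset u (mset R)" using ms us vs by simp
        also have "mset R = add_mset v (mset W)" using mW by simp
        finally have "add_mset v (mset R') = add_mset v (add_mset u (mset W))" by (simp add: add_mset_commute)
        then show ?thesis by simp
      qed
      have lUW: "length (u # W) = k" using lW by simp
      have "kderiv (Suc k) f z us = kderiv (Suc k) f z (u # v # W)"
        using tail[OF lR mW, of u] us by simp
      also have "\<dots> = kderiv (Suc k) f z (v # u # W)" by (rule swap[OF lW])
      also have "\<dots> = kderiv (Suc k) f z vs" using tail[OF lUW mR'] vs by simp
      finally show ?thesis by simp
    qed
  qed
qed

lemma mzero:
  assumes "mlin n A" "length xs + Suc (length ys) = n"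
  shows "A (xs @ 0 # ys) = 0"
  using mlinD(2)[OF assms, of 0 0] by simp

lemma mhom:
  assumes ml: "mlin n A"
  shows "length xs + m + length ys = n \<Longrightarrow> A (xs @ replicate m (c *\<^sub>R u) @ ys) = c^m * A (xs @ replicate m u @ ys)"
proof (induction m arbitrary: ys)
  case 0 then show ?case by simp
next
  case (Suc m)
  have r: "replicate (Suc m) x @ ys = replicate m x @ x # ys" for x :: 'a
    by (simp add: replicate_app_Cons_same)
  have "A (xs @ replicate (Suc m) (c *\<^sub>R u) @ ys) = A (xs @ replicate m (c *\<^sub>R u) @ (c *\<^sub>R u) # ys)"
    by (simp only: r)
  also have "\<dots> = c^m * A (xs @ replicate m u @ (c *\<^sub>R u) # ys)"
    using Suc.IH[of "(c *\<^sub>R u) # ys"] Suc.prems by simp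
  also have "A (xs @ replicate m u @ (c *\<^sub>R u) # ys) = c * A (xs @ replicate m u @ u # ys)"
    using mlinD(2)[OF ml, of "xs @ replicate m u" ys c u] Suc.prems by simp
  also have "A (xs @ replicate m u @ u # ys) = A (xs @ replicate (Suc m) u @ ys)"
    by (simp only: r)
  finally show ?case by simp
qed

lemma mlin_cons:
  assumes "mlin (Suc n) A" shows "mlin n (\<lambda>us. A (b # us))"
  unfolding mlin_def
proof (intro allI impI)
  fix xs ys :: "'a list" assume "length xs + Suc (length ys) = n"
  then have "length (b # xs) + Suc (length ys) = Suc n" by simp
  then have "linear (\<lambda>u. A ((b # xs) @ u # ys))" using assms unfolding mlin_def by blast
  then show "linear (\<lambda>u. A (b # xs @ u # ys))" by simp
qed

lemma mbound:
  fixes A :: "'a::euclidean_space list \<Rightarrow> real"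
  shows "mlin n A \<Longrightarrow> \<exists>C\<ge>0. \<forall>us. length us = n \<longrightarrow> \<bar>A us\<bar> \<le> C * prod_list (map norm us)"
proof (induction n arbitrary: A)
  case 0
  show ?case by (rule exI[of _ "\<bar>A []\<bar>"]) auto
next
  case (Suc n)
  have "\<forall>b\<in>Basis. \<exists>C\<ge>0. \<forall>us. length us = n \<longrightarrow> \<bar>A (b # us)\<bar> \<le> C * prod_list (map norm us)"
    using Suc.IH[OF mlin_cons[OF Suc.prems]] by blast
  from bchoice[OF this] obtain CC where CCb: "\<forall>b\<in>Basis. CC b \<ge> 0 \<and>
      (\<forall>us. length us = n \<longrightarrow> \<bar>A (b # us)\<bar> \<le> CC b * prod_list (map norm us))"
    by blast
  then have CC: "\<And>b. b \<in> Basis \<Longrightarrow> CC b \<ge> 0"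
    "\<And>b us. b \<in> Basis \<Longrightarrow> length us = n \<Longrightarrow> \<bar>A (b # us)\<bar> \<le> CC b * prod_list (map norm us)"
    by auto
  show ?case
  proof (intro exI[of _ "\<Sum>b\<in>Basis. CC b"] conjI allI impI)
    show "0 \<le> (\<Sum>b\<in>Basis. CC b)" using CC(1) by (simp add: sum_nonneg)
    fix us :: "'a list" assume len: "length us = Suc n"
    then obtain u R where us: "us = u # R" by (cases us) auto
    have lR: "length R = n" using len us by simp
    have lin: "linear (\<lambda>u. A (u # R))"
      using Suc.prems[unfolded mlin_def, rule_format, of "[]" R] lR by simp
    have "A (u # R) = A ((\<Sum>b\<in>Basis. (u \<bullet> b) *\<^sub>R b) # R)" by (simp add: euclidean_representation)
    also have "\<dots> = (\<Sum>b\<in>Basis. (u \<bullet> b) * A (b # R))"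
      using linear_sum[OF lin, of "\<lambda>b. (u \<bullet> b) *\<^sub>R b" Basis] linear_scale[OF lin] by simp
    finally have eq: "A (u # R) = (\<Sum>b\<in>Basis. (u \<bullet> b) * A (b # R))" .
    have "\<bar>A (u # R)\<bar> \<le> (\<Sum>b\<in>Basis. \<bar>(u \<bullet> b) * A (b # R)\<bar>)" unfolding eq by (rule sum_abs)
    also have "\<dots> \<le> (\<Sum>b\<in>Basis. norm u * (CC b * prod_list (map norm R)))"
    proof (rule sum_mono)
      fix b :: 'a assume b: "b \<in> Basis"
      have "\<bar>u \<bullet> b\<bar> \<le> norm u" using Basis_le_norm[OF b] by simp
      then show "\<bar>(u \<bullet> b) * A (b # R)\<bar> \<le> norm u * (CC b * prod_list (map norm R))"
        unfolding abs_mult using CC(2)[OF b lR] by (intro mult_mono) auto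
    qed
    also have "\<dots> = (\<Sum>b\<in>Basis. CC b) * prod_list (map norm us)"
      unfolding us by (simp add: sum_distrib_left sum_distrib_right algebra_simps)
    finally show "\<bar>A us\<bar> \<le> (\<Sum>b\<in>Basis. CC b) * prod_list (map norm us)" using us by simp
  qed
qed

locale bspace =
  fixes B :: "'a::euclidean_space \<Rightarrow> 'a"
  assumes B_lin: "linear B"
    and B_sa: "\<And>u v. B u \<bullet> v = u \<bullet> B v"
    and B_pd: "\<And>u. u \<noteq> 0 \<Longrightarrow> B u \<bullet> u > 0"
begin

lemma Badd: "B (u + v) = B u + B v" using linear_add[OF B_lin] .
lemma Bscale: "B (c *\<^sub>R u) = c *\<^sub>R B u" using linear_scale[OF B_lin] .
lemma Bdiff: "B (u - v) = B u - B v" using linear_diff[OF B_lin] .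
lemma B0: "B 0 = 0" using linear_0[OF B_lin] .

lemma bsym: "B u \<bullet> v = B v \<bullet> u" using B_sa[of u v] inner_commute[of u "B v"] by simp

lemma bq_nonneg: "B u \<bullet> u \<ge> 0"
  using B_pd[of u] by (cases "u = 0") (auto simp: B0)

lemma bnorm_nonneg: "bnorm B u \<ge> 0" unfolding bnorm_def using bq_nonneg[of u] by simp

lemma bnorm_sq: "(bnorm B u)\<^sup>2 = B u \<bullet> u" unfolding bnorm_def using bq_nonneg[of u] by simp

lemma bnorm_zero_iff: "bnorm B u = 0 \<longleftrightarrow> u = 0"
proof -
  have "bnorm B u = 0 \<longleftrightarrow> B u \<bullet> u = 0" unfolding bnorm_def by simp
  also have "\<dots> \<longleftrightarrow> u = 0" using B_pd[of u] B0 by (cases "u = 0") auto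
  finally show ?thesis .
qed

lemma bnorm_pos: "u \<noteq> 0 \<Longrightarrow> bnorm B u > 0"
  using bnorm_zero_iff bnorm_nonneg by (metis less_eq_real_def)

lemma bnorm_scale: "bnorm B (c *\<^sub>R u) = \<bar>c\<bar> * bnorm B u"
proof -
  have "B (c *\<^sub>R u) \<bullet> (c *\<^sub>R u) = c\<^sup>2 * (B u \<bullet> u)" by (simp add: Bscale power2_eq_square)
  then show ?thesis unfolding bnorm_def by (simp add: real_sqrt_mult)
qed

lemma bnorm_minus_commute: "bnorm B (x - y) = bnorm B (y - x)"
  using bnorm_scale[of "-1" "x - y"] by simp

lemma bcs: "\<bar>B u \<bullet> v\<bar> \<le> bnorm B u * bnorm B v"
proof (cases "v = 0")
  case True then show ?thesis by (simp add: B0 bnorm_nonneg)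
next
  case False
  define q where "q = B v \<bullet> v"
  have q: "q > 0" using B_pd[OF False] q_def by simp
  define t where "t = (B u \<bullet> v) / q"
  have "0 \<le> B (u - t *\<^sub>R v) \<bullet> (u - t *\<^sub>R v)" by (rule bq_nonneg)
  also have "\<dots> = B u \<bullet> u - 2 * t * (B u \<bullet> v) + t\<^sup>2 * q"
    unfolding q_def by (simp add: Bdiff Bscale inner_diff_left inner_diff_right bsym[of v u] power2_eq_square algebra_simps)
  also have "\<dots> = B u \<bullet> u - (B u \<bullet> v)\<^sup>2 / q"
    unfolding t_def using q by (simp add: power2_eq_square field_simps)
  finally have "(B u \<bullet> v)\<^sup>2 \<le> (B u \<bullet> u) * q" using q by (simp add: field_simps)
  then have "(B u \<bullet> v)\<^sup>2 \<le> (bnorm B u * bnorm B v)\<^sup>2"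
    unfolding power_mult_distrib bnorm_sq q_def .
  then show ?thesis
    using power2_le_imp_le[of "\<bar>B u \<bullet> v\<bar>" "bnorm B u * bnorm B v"] bnorm_nonneg[of u] bnorm_nonneg[of v]
    by simp
qed

lemma norm_le_bnorm: "\<exists>c>0. \<forall>u. norm u \<le> c * bnorm B u"
proof -
  have cont: "continuous_on (sphere 0 1) (\<lambda>u. B u \<bullet> u)"
    using B_lin by (intro continuous_intros) (auto simp: linear_continuous_on linear_conv_bounded_linear)
  have ne: "sphere (0::'a) 1 \<noteq> {}" by (simp add: sphere_eq_empty)
  obtain u0 where u0: "u0 \<in> sphere 0 1" "\<And>u. u \<in> sphere 0 1 \<Longrightarrow> B u0 \<bullet> u0 \<le> B u \<bullet> u"
    using continuous_attains_inf[OF compact_sphere ne cont] by blast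
  define lam where "lam = B u0 \<bullet> u0"
  have "u0 \<noteq> 0" using u0(1) by auto
  then have lam: "lam > 0" unfolding lam_def using B_pd[of u0] by auto
  show ?thesis
  proof (intro exI[of _ "1 / sqrt lam"] conjI allI)
    show "0 < 1 / sqrt lam" using lam by simp
    fix u :: 'a
    show "norm u \<le> 1 / sqrt lam * bnorm B u"
    proof (cases "u = 0")
      case True then show ?thesis using lam bnorm_nonneg[of u] by simp
    next
      case False
      define u1 where "u1 = (1 / norm u) *\<^sub>R u"
      have "u1 \<in> sphere 0 1" unfolding u1_def using False by simp
      then have "lam \<le> B u1 \<bullet> u1" using u0(2) lam_def by simp
      also have "B u1 \<bullet> u1 = (B u \<bullet> u) / (norm u)\<^sup>2" unfolding u1_def
        by (simp add: Bscale power2_eq_square)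
      finally have "lam * (norm u)\<^sup>2 \<le> B u \<bullet> u" using False by (simp add: field_simps)
      then have "sqrt (lam * (norm u)\<^sup>2) \<le> bnorm B u" unfolding bnorm_def
        by (rule real_sqrt_le_mono)
      then have "sqrt lam * norm u \<le> bnorm B u" by (simp add: real_sqrt_mult)
      then show ?thesis using lam by (simp add: field_simps)
    qed
  qed
qed

end

context bspace begin

lemma bnorm0[simp]: "bnorm B 0 = 0" using bnorm_zero_iff by simp

lemma B_inj: "inj B"
  using B_lin B_pd by (metis linear_injective_0 inner_zero_left less_irrefl)

lemma B_surj: "surj B"
  using B_lin B_inj by (rule linear_injective_imp_surjective) simp

lemma B_inv1: "B (inv B g) = g" using B_surj by (simp add: surj_f_inv_f)
lemma B_inv2: "inv B (B u) = u" using B_inj by (simp add: inv_f_f)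

lemma dnorm_eq: "dnorm B g = bnorm B (inv B g)"
  unfolding dnorm_def bnorm_def using B_inv1[of g] by simp

lemma dnorm_nonneg: "dnorm B g \<ge> 0" unfolding dnorm_eq by (rule bnorm_nonneg)

lemma dual_cs: "\<bar>g \<bullet> v\<bar> \<le> dnorm B g * bnorm B v"
  using bcs[of "inv B g" v] unfolding dnorm_eq B_inv1 .

lemma dnorm_le:
  assumes c: "c \<ge> 0" and H: "\<And>v. g \<bullet> v \<le> c * bnorm B v"
  shows "dnorm B g \<le> c"
proof (cases "dnorm B g = 0")
  case True then show ?thesis using c by simp
next
  case False
  then have pos: "dnorm B g > 0" using dnorm_nonneg by (simp add: less_le)
  have "(dnorm B g)\<^sup>2 = g \<bullet> inv B g" unfolding dnorm_eq bnorm_sq B_inv1 ..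
  also have "\<dots> \<le> c * dnorm B g" using H[of "inv B g"] unfolding dnorm_eq .
  finally show ?thesis using pos by (simp add: power2_eq_square)
qed

lemma dnorm_B: "dnorm B (B d) = bnorm B d" unfolding dnorm_eq B_inv2 ..

lemma tnorm_bound:
  assumes ml: "mlin p A" and p1: "p \<ge> 1"
  shows "\<bar>A (replicate p u)\<bar> \<le> tnorm B p A * bnorm B u ^ p" "tnorm B p A \<ge> 0"
proof -
  define S where "S = {\<bar>A (replicate p u)\<bar> | u. bnorm B u \<le> 1}"
  have tn: "tnorm B p A = Sup S" unfolding tnorm_def S_def ..
  obtain C where C: "C \<ge> 0" "\<And>us. length us = p \<Longrightarrow> \<bar>A us\<bar> \<le> C * prod_list (map norm us)"
    using mbound[OF ml] by blast
  obtain c where c: "c > 0" "\<And>u. norm u \<le> c * bnorm B u" using norm_le_bnorm by blast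
  have bdd: "bdd_above S"
  proof (rule bdd_aboveI)
    fix x assume "x \<in> S"
    then obtain u where u: "x = \<bar>A (replicate p u)\<bar>" "bnorm B u \<le> 1" unfolding S_def by blast
    have "norm u \<le> c" using c(2)[of u] u(2) c(1) by (smt (verit) mult_left_le)
    have "x \<le> C * norm u ^ p" using C(2)[of "replicate p u"] u(1) by (simp add: prod_list_replicate)
    also have "\<dots> \<le> C * c ^ p" using \<open>norm u \<le> c\<close> C(1) by (intro mult_left_mono power_mono) auto
    finally show "x \<le> C * c ^ p" .
  qed
  have z: "A (replicate p 0) = 0"
    using mzero[OF ml, of "[]" "replicate (p-1) 0"] p1 by (simp add: replicate_Suc[symmetric] del: replicate_Suc)
  have "0 \<in> S" unfolding S_def using z by (auto intro!: exI[of _ 0] simp: bnorm_zero_iff)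
  then show t0: "tnorm B p A \<ge> 0" unfolding tn using bdd by (rule cSup_upper)
  show "\<bar>A (replicate p u)\<bar> \<le> tnorm B p A * bnorm B u ^ p"
  proof (cases "u = 0")
    case True then show ?thesis using z p1 by (simp add: power_0_left)
  next
    case False
    define n where "n = bnorm B u"
    have n: "n > 0" unfolding n_def using bnorm_pos[OF False] .
    define u1 where "u1 = (1 / n) *\<^sub>R u"
    have u: "u = n *\<^sub>R u1" unfolding u1_def using n by simp
    have "bnorm B u1 = 1" unfolding u1_def bnorm_scale using n n_def by simp
    then have "\<bar>A (replicate p u1)\<bar> \<in> S" unfolding S_def by auto
    then have le: "\<bar>A (replicate p u1)\<bar> \<le> tnorm B p A" unfolding tn using bdd by (rule cSup_upper)
    have "A (replicate p u) = n ^ p * A (replicate p u1)"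
      using mhom[OF ml, of "[]" p "[]" n u1] u by simp
    then have "\<bar>A (replicate p u)\<bar> = n ^ p * \<bar>A (replicate p u1)\<bar>" using n by (simp add: abs_mult)
    also have "\<dots> \<le> n ^ p * tnorm B p A" using le n by simp
    finally show ?thesis unfolding n_def by (simp add: mult.commute)
  qed
qed

lemma banach:
  fixes A :: "'a list \<Rightarrow> real"
  assumes ml: "mlin p A" and ms: "msym p A" and p2: "p \<ge> 2" and M0: "M \<ge> 0"
    and Mb: "\<And>u. \<bar>A (replicate p u)\<bar> \<le> M * bnorm B u ^ p"
  shows "\<bar>A (v # replicate (p-1) d)\<bar> \<le> M * bnorm B v * bnorm B d ^ (p-1)"
proof (cases "d = 0")
  case True
  obtain k where k: "p = 2 + k" using p2 le_iff_add by blast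
  have "A (v # replicate (p-1) d) = A ([v] @ 0 # replicate (p-2) 0)"
    using True k by (simp add: numeral_2_eq_2)
  also have "\<dots> = 0" by (rule mzero[OF ml]) (use p2 in simp)
  finally show ?thesis using True p2 by (simp add: power_0_left)
next
  case False
  define n where "n = bnorm B d"
  have n: "n > 0" unfolding n_def using bnorm_pos[OF False] .
  define d1 where "d1 = (1 / n) *\<^sub>R d"
  have dd: "d = n *\<^sub>R d1" unfolding d1_def using n by simp
  have bd1: "bnorm B d1 = 1" unfolding d1_def bnorm_scale using n n_def by simp
  have Bd1: "B d1 \<bullet> d1 = 1" using bd1 bnorm_sq[of d1] by simp
  have hom: "A (v # replicate (p-1) d) = n ^ (p-1) * A (v # replicate (p-1) d1)"
    using mhom[OF ml, of "[v]" "p-1" "[]" n d1] dd p2 by simp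
  have rep: "replicate p x = x # replicate (p-1) x" for x :: 'a
    using p2 by (cases p) auto
  have main: "\<bar>A (v # replicate (p-1) d1)\<bar> \<le> M * bnorm B v"
  proof -
    define R where "R = replicate (p-1) d1"
    have linv: "linear (\<lambda>u. A (u # R))"
      using ml[unfolded mlin_def, rule_format, of "[]" R] p2 unfolding R_def by simp
    define \<alpha> where "\<alpha> = B d1 \<bullet> v"
    define v' where "v' = v - \<alpha> *\<^sub>R d1"
    have orth: "B d1 \<bullet> v' = 0" unfolding v'_def \<alpha>_def using Bd1 by (simp add: inner_diff_right)
    have a_le: "\<bar>A (replicate p d1)\<bar> \<le> M" using Mb[of d1] bd1 by simp
    show ?thesis
    proof (cases "v' = 0")
      case True
      then have vv: "v = \<alpha> *\<^sub>R d1" unfolding v'_def by simp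
      have "A (v # R) = \<alpha> * A (replicate p d1)" unfolding vv rep R_def using linear_scale[OF linv] R_def by simp
      then have "\<bar>A (v # R)\<bar> \<le> \<bar>\<alpha>\<bar> * M" using a_le by (simp add: abs_mult mult_left_mono)
      moreover have "bnorm B v = \<bar>\<alpha>\<bar>" unfolding vv bnorm_scale bd1 by simp
      ultimately show ?thesis unfolding R_def by (simp add: mult.commute)
    next
      case False
      define \<beta> where "\<beta> = bnorm B v'"
      have \<beta>: "\<beta> > 0" unfolding \<beta>_def using bnorm_pos[OF False] .
      define w where "w = (1 / \<beta>) *\<^sub>R v'"
      have v'w: "v' = \<beta> *\<^sub>R w" unfolding w_def using \<beta> by simp
      have vv: "v = \<alpha> *\<^sub>R d1 + \<beta> *\<^sub>R w" using v'w unfolding v'_def by (simp add: algebra_simps)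
      have bw: "bnorm B w = 1" unfolding w_def bnorm_scale using \<beta> \<beta>_def by simp
      have Bww: "B w \<bullet> w = 1" using bw bnorm_sq[of w] by simp
      have Bdw: "B d1 \<bullet> w = 0" unfolding w_def using orth by (simp add: inner_commute)
      have Bwd: "B w \<bullet> d1 = 0" using Bdw bsym by simp
      define a where "a = A (replicate p d1)"
      define b where "b = A (w # replicate (p-1) d1)"
      have ab: "a\<^sup>2 + b\<^sup>2 \<le> M\<^sup>2" unfolding a_def b_def
      proof (rule banach2[OF ml ms p2])
        fix t :: real
        have "(bnorm B (w + t *\<^sub>R d1))\<^sup>2 = 1 + t\<^sup>2"
          unfolding bnorm_sq using Bww Bd1 Bwd Bdw
          by (simp add: Badd Bscale inner_add_left inner_add_right power2_eq_square)
        then have "bnorm B (w + t *\<^sub>R d1) = sqrt (1 + t\<^sup>2)"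
          using bnorm_nonneg by (metis real_sqrt_unique)
        then show "\<bar>A (replicate p (w + t *\<^sub>R d1))\<bar> \<le> M * sqrt (1 + t\<^sup>2) ^ p"
          using Mb[of "w + t *\<^sub>R d1"] by simp
      next
        show "\<bar>A (replicate p d1)\<bar> \<le> M" using a_le .
      qed
      have Av: "A (v # R) = \<alpha> * a + \<beta> * b"
        unfolding vv a_def b_def R_def using linear_add[OF linv] linear_scale[OF linv] rep R_def by simp
      have vn: "(bnorm B v)\<^sup>2 = \<alpha>\<^sup>2 + \<beta>\<^sup>2"
        unfolding bnorm_sq vv using Bww Bd1 Bwd Bdw
        by (simp add: Badd Bscale inner_add_left inner_add_right power2_eq_square)
      have cs: "(\<alpha> * a + \<beta> * b)\<^sup>2 \<le> (\<alpha>\<^sup>2 + \<beta>\<^sup>2) * (a\<^sup>2 + b\<^sup>2)"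
      proof -
        have "(\<alpha>\<^sup>2 + \<beta>\<^sup>2) * (a\<^sup>2 + b\<^sup>2) - (\<alpha> * a + \<beta> * b)\<^sup>2 = (\<alpha> * b - \<beta> * a)\<^sup>2"
          by (simp add: power2_eq_square algebra_simps)
        then show ?thesis by (smt (verit) zero_le_power2)
      qed
      also have "\<dots> \<le> (\<alpha>\<^sup>2 + \<beta>\<^sup>2) * M\<^sup>2" using ab by (intro mult_left_mono) auto
      also have "\<dots> = (bnorm B v * M)\<^sup>2" using vn by (simp add: power_mult_distrib)
      finally have "(A (v # R))\<^sup>2 \<le> (bnorm B v * M)\<^sup>2" using Av by simp
      then have "\<bar>A (v # R)\<bar> \<le> bnorm B v * M"
        using power2_le_imp_le[of "\<bar>A (v # R)\<bar>" "bnorm B v * M"] bnorm_nonneg[of v] M0 by simp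
      then show ?thesis unfolding R_def by (simp add: mult.commute)
    qed
  qed
  have "\<bar>A (v # replicate (p-1) d)\<bar> = n ^ (p-1) * \<bar>A (v # replicate (p-1) d1)\<bar>"
    using hom n by (simp add: abs_mult)
  also have "\<dots> \<le> n ^ (p-1) * (M * bnorm B v)" using main n by (intro mult_left_mono) auto
  finally show ?thesis unfolding n_def by (simp add: algebra_simps)
qed

end

lemma deriv_term:
  "((\<lambda>s. C * s ^ Suc m / fact (Suc m)) has_real_derivative C * s ^ m / fact m) (at s)"
proof -
  have "((\<lambda>s. s ^ Suc m) has_real_derivative real (Suc m) * s ^ m) (at s)"
    using DERIV_pow[of "Suc m" s] by simp
  then have "((\<lambda>s. C * s ^ Suc m / fact (Suc m)) has_real_derivative C * (real (Suc m) * s ^ m) / fact (Suc m)) (at s)"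
    by (intro DERIV_cdivide DERIV_cmult)
  moreover have "C * (real (Suc m) * s ^ m) / fact (Suc m) = C * s ^ m / fact m"
    by (simp add: fact_Suc field_simps del: of_nat_Suc)
  ultimately show ?thesis by simp
qed

lemma step_bound:
  fixes u u' :: "real \<Rightarrow> real"
  assumes d: "\<And>t. 0 \<le> t \<Longrightarrow> t \<le> 1 \<Longrightarrow> (u has_real_derivative u' t) (at t)"
    and u0: "u 0 = 0"
    and b: "\<And>t. 0 \<le> t \<Longrightarrow> t \<le> 1 \<Longrightarrow> \<bar>u' t\<bar> \<le> C * t ^ m / fact m"
    and t: "0 \<le> t" "t \<le> 1"
  shows "\<bar>u t\<bar> \<le> C * t ^ Suc m / fact (Suc m)"
proof (cases "t = 0")
  case True then show ?thesis using u0 by simp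
next
  case False
  then have tp: "t > 0" using t by simp
  have dq: "((\<lambda>s. C * s ^ Suc m / fact (Suc m)) has_real_derivative C * s ^ m / fact m) (at s)" for s
  proof -
    have "((\<lambda>s. s ^ Suc m) has_real_derivative real (Suc m) * s ^ m) (at s)"
      using DERIV_pow[of "Suc m" s] by simp
    then have "((\<lambda>s. C * s ^ Suc m / fact (Suc m)) has_real_derivative C * (real (Suc m) * s ^ m) / fact (Suc m)) (at s)"
      by (intro DERIV_cdivide DERIV_cmult)
    moreover have "C * (real (Suc m) * s ^ m) / fact (Suc m) = C * s ^ m / fact m"
      by (simp add: fact_Suc field_simps del: of_nat_Suc)
    ultimately show ?thesis by simp
  qed
  have up: "u t \<le> C * t ^ Suc m / fact (Suc m)"
  proof -
    define w where "w s = C * s ^ Suc m / fact (Suc m) - u s" for s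
    have dw: "(w has_real_derivative (C * s ^ m / fact m - u' s)) (at s)" if "0 \<le> s" "s \<le> t" for s
      unfolding w_def using dq[of s] d[of s] that t by (auto intro!: DERIV_diff)
    obtain \<xi> where xi: "0 < \<xi>" "\<xi> < t" "w t - w 0 = (t - 0) * (C * \<xi> ^ m / fact m - u' \<xi>)"
      using MVT2[OF tp, of w "\<lambda>s. C * s ^ m / fact m - u' s"] dw by auto
    have "u' \<xi> \<le> C * \<xi> ^ m / fact m" using b[of \<xi>] xi t by auto
    then have "w t - w 0 \<ge> 0" using xi tp by simp
    then show ?thesis unfolding w_def using u0 by simp
  qed
  have lo: "- u t \<le> C * t ^ Suc m / fact (Suc m)"
  proof -
    define w where "w s = C * s ^ Suc m / fact (Suc m) + u s" for s
    have dw: "(w has_real_derivative (C * s ^ m / fact m + u' s)) (at s)" if "0 \<le> s" "s \<le> t" for s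
      unfolding w_def using dq[of s] d[of s] that t by (auto intro!: DERIV_add)
    obtain \<xi> where xi: "0 < \<xi>" "\<xi> < t" "w t - w 0 = (t - 0) * (C * \<xi> ^ m / fact m + u' \<xi>)"
      using MVT2[OF tp, of w "\<lambda>s. C * s ^ m / fact m + u' s"] dw by auto
    have "- u' \<xi> \<le> C * \<xi> ^ m / fact m" using b[of \<xi>] xi t by auto
    then have "w t - w 0 \<ge> 0" using xi tp by simp
    then show ?thesis unfolding w_def using u0 by simp
  qed
  show ?thesis using up lo by simp
qed

lemma iter_bound:
  fixes g :: "nat \<Rightarrow> real \<Rightarrow> real"
  shows "(\<And>j t. j < n \<Longrightarrow> 0 \<le> t \<Longrightarrow> t \<le> 1 \<Longrightarrow> (g j has_real_derivative g (Suc j) t) (at t)) \<Longrightarrow>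
    (\<And>j. j < n \<Longrightarrow> g j 0 = 0) \<Longrightarrow>
    (\<And>t. 0 \<le> t \<Longrightarrow> t \<le> 1 \<Longrightarrow> \<bar>g n t\<bar> \<le> C * t ^ m / fact m) \<Longrightarrow>
    0 \<le> t \<Longrightarrow> t \<le> 1 \<Longrightarrow> \<bar>g 0 t\<bar> \<le> C * t ^ (n + m) / fact (n + m)"
proof (induction n arbitrary: m t)
  case 0 then show ?case by simp
next
  case (Suc n)
  have bn: "\<bar>g n s\<bar> \<le> C * s ^ Suc m / fact (Suc m)" if "0 \<le> s" "s \<le> 1" for s
    by (rule step_bound[of "g n" "g (Suc n)" C m s]) (use Suc.prems that in auto)
  have "\<bar>g 0 t\<bar> \<le> C * t ^ (n + Suc m) / fact (n + Suc m)"
    by (rule Suc.IH) (use Suc.prems bn in auto)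
  then show ?case by simp
qed

lemma taylor_grad_bound:
  assumes U: "open U" and kd: "ktimes_differentiable_on p f U" and p1: "p \<ge> 1"
    and seg: "\<And>t. 0 \<le> t \<Longrightarrow> t \<le> 1 \<Longrightarrow> x + t *\<^sub>R d \<in> U"
    and bnd: "\<And>t. 0 \<le> t \<Longrightarrow> t \<le> 1 \<Longrightarrow>
      \<bar>kderiv p f (x + t *\<^sub>R d) (replicate (p-1) d @ [v]) - kderiv p f x (replicate (p-1) d @ [v])\<bar> \<le> C * t"
  shows "\<bar>kderiv 1 f (x + d) [v] - (\<Sum>j<p. kderiv (Suc j) f x (replicate j d @ [v]) / fact j)\<bar> \<le> C / fact p"
proof -
  define \<phi> where "\<phi> j t = kderiv (Suc j) f (x + t *\<^sub>R d) (replicate j d @ [v])" for j t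
  define c where "c j = kderiv (Suc j) f x (replicate j d @ [v])" for j
  define P where "P j t = (\<Sum>i<p - j. c (j + i) * t ^ i / fact i)" for j t
  define g where "g j t = \<phi> j t - P j t" for j t
  have dphi: "(\<phi> j has_real_derivative \<phi> (Suc j) t) (at t)" if "j < p - 1" "0 \<le> t" "t \<le> 1" for j t
  proof -
    have "((\<lambda>y. kderiv (Suc j) f y (replicate j d @ [v])) has_derivative
        (\<lambda>w. kderiv (Suc (Suc j)) f (x + t *\<^sub>R d) (w # replicate j d @ [v]))) (at (x + t *\<^sub>R d))"
      by (rule kd_has_deriv[OF kd _ seg[OF that(2,3)]]) (use that in auto)
    from line_deriv[OF this] show ?thesis unfolding \<phi>_def by simp
  qed
  have dP: "(P j has_real_derivative P (Suc j) t) (at t)" if "j < p - 1" for j t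
  proof -
    define N where "N = p - Suc j"
    have N: "p - j = Suc N" unfolding N_def using that by (simp add: Suc_diff_Suc)
    have N2: "p - Suc j = N" using N by simp
    have Pe: "P j = (\<lambda>t. c j + (\<Sum>i<N. c (j + Suc i) * t ^ Suc i / fact (Suc i)))"
      unfolding P_def N sum.lessThan_Suc_shift by simp
    have "((\<lambda>t. \<Sum>i<N. c (j + Suc i) * t ^ Suc i / fact (Suc i)) has_real_derivative
        (\<Sum>i<N. c (j + Suc i) * t ^ i / fact i)) (at t)"
      by (rule DERIV_sum) (rule deriv_term)
    then have "(P j has_real_derivative 0 + (\<Sum>i<N. c (j + Suc i) * t ^ i / fact i)) (at t)"
      unfolding Pe by (intro DERIV_add DERIV_const)
    moreover have "0 + (\<Sum>i<N. c (j + Suc i) * t ^ i / fact i) = P (Suc j) t"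
      unfolding P_def N2 by simp
    ultimately show ?thesis by simp
  qed
  have dg: "(g j has_real_derivative g (Suc j) t) (at t)" if "j < p - 1" "0 \<le> t" "t \<le> 1" for j t
    unfolding g_def[abs_def] using dphi[OF that] dP[OF that(1)] by (auto intro!: DERIV_diff)
  have g0: "g j 0 = 0" if "j < p - 1" for j
  proof -
    define N where "N = p - Suc j"
    have N: "p - j = Suc N" unfolding N_def using that by (simp add: Suc_diff_Suc)
    have "P j 0 = c j" unfolding P_def N sum.lessThan_Suc_shift by simp
    then show ?thesis unfolding g_def \<phi>_def c_def by simp
  qed
  have gb: "\<bar>g (p - 1) t\<bar> \<le> C * t ^ 1 / fact 1" if "0 \<le> t" "t \<le> 1" for t
  proof -
    have "p - (p - 1) = 1" using p1 by simp
    then have "P (p-1) t = c (p-1)" unfolding P_def by simp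
    then have "g (p-1) t = kderiv p f (x + t *\<^sub>R d) (replicate (p-1) d @ [v]) - kderiv p f x (replicate (p-1) d @ [v])"
      unfolding g_def \<phi>_def c_def using p1 by simp
    then show ?thesis using bnd[OF that] by simp
  qed
  have "\<bar>g 0 1\<bar> \<le> C * 1 ^ (p - 1 + 1) / fact (p - 1 + 1)"
    by (rule iter_bound[of "p - 1" g C 1 1]) (use dg g0 gb in auto)
  moreover have "g 0 1 = kderiv 1 f (x + d) [v] - (\<Sum>j<p. kderiv (Suc j) f x (replicate j d @ [v]) / fact j)"
    unfolding g_def \<phi>_def P_def c_def by simp
  moreover have "p - 1 + 1 = p" using p1 by simp
  ultimately show ?thesis by simp
qed

lemma deriv_ge:
  fixes \<phi> :: "real \<Rightarrow> real"
  assumes d: "(\<phi> has_real_derivative D) (at 0)"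
    and le: "\<And>s. 0 < s \<Longrightarrow> s \<le> 1 \<Longrightarrow> s * K \<le> \<phi> s - \<phi> 0"
  shows "K \<le> D"
proof -
  have "(\<phi> has_real_derivative D) (at 0 within {0<..})" using d by (rule has_field_derivative_at_within)
  then have t: "((\<lambda>s. (\<phi> s - \<phi> 0) / (s - 0)) \<longlongrightarrow> D) (at_right 0)"
    by (simp add: has_field_derivative_iff)
  have ev: "eventually (\<lambda>s. K \<le> (\<phi> s - \<phi> 0) / (s - 0)) (at_right 0)"
    unfolding eventually_at_right_field
  proof (intro exI[of _ 1] conjI allI impI)
    fix s :: real assume "0 < s" "s < 1"
    then show "K \<le> (\<phi> s - \<phi> 0) / (s - 0)" using le[of s] by (simp add: pos_le_divide_eq mult.commute)
  qed simp
  show ?thesis by (rule tendsto_lowerbound[OF t ev]) simp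
qed

lemma dualvec_inner:
  fixes L :: "'a::euclidean_space \<Rightarrow> real"
  assumes "linear L"
  shows "dualvec L \<bullet> v = L v"
proof -
  have "dualvec L \<bullet> v = (\<Sum>b\<in>Basis. L b * (b \<bullet> v))"
    unfolding dualvec_def by (simp add: inner_sum_left)
  also have "\<dots> = (\<Sum>b\<in>Basis. (v \<bullet> b) * L b)" by (simp add: inner_commute mult.commute)
  also have "\<dots> = L (\<Sum>b\<in>Basis. (v \<bullet> b) *\<^sub>R b)"
    using linear_sum[OF assms, of "\<lambda>b. (v \<bullet> b) *\<^sub>R b" Basis] linear_scale[OF assms] by simp
  also have "\<dots> = L v" by (simp add: euclidean_representation)
  finally show ?thesis .
qed

lemma mlin_diff:
  assumes "mlin n A" "mlin n A'"
  shows "mlin n (\<lambda>us. A us - A' us)"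
  unfolding mlin_def
proof (intro allI impI)
  fix xs ys :: "'a list" assume l: "length xs + Suc (length ys) = n"
  show "linear (\<lambda>u. A (xs @ u # ys) - A' (xs @ u # ys))"
    by (rule linearI) (simp_all add: mlinD[OF assms(1) l] mlinD[OF assms(2) l] algebra_simps)
qed

lemma msym_diff:
  assumes "msym n A" "msym n A'"
  shows "msym n (\<lambda>us. A us - A' us)"
  unfolding msym_def
proof (intro allI impI)
  fix us vs :: "'a list" assume l: "length us = n" and m: "mset vs = mset us"
  show "A vs - A' vs = A us - A' us" using msymD[OF assms(1) l m] msymD[OF assms(2) l m] by simp
qed

lemma finite_ereal:
  assumes "proper_fun h" "h y < \<infinity>"
  shows "h y = ereal (real_of_ereal (h y))"
proof (cases "h y")
  case MInf then show ?thesis using assms(1) unfolding proper_fun_def by force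
qed (use assms in auto)

lemma convex_h:
  fixes h :: "'a::real_vector \<Rightarrow> ereal"
  assumes cv: "convex_fun h" and pr: "proper_fun h"
    and y: "h y < \<infinity>" and z: "h z < \<infinity>" and s: "0 \<le> s" "s \<le> 1"
  shows "h ((1 - s) *\<^sub>R y + s *\<^sub>R z) \<le> ereal ((1 - s) * real_of_ereal (h y) + s * real_of_ereal (h z))"
proof -
  define E where "E = {(x, t::real). h x \<le> ereal t}"
  have cE: "convex E" using cv unfolding convex_fun_def E_def .
  have "(y, real_of_ereal (h y)) \<in> E" unfolding E_def using finite_ereal[OF pr y] by simp
  moreover have "(z, real_of_ereal (h z)) \<in> E" unfolding E_def using finite_ereal[OF pr z] by simp
  ultimately have "(1 - s) *\<^sub>R (y, real_of_ereal (h y)) + s *\<^sub>R (z, real_of_ereal (h z)) \<in> E"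
    using cE[unfolded convex_def, rule_format, of "(y, real_of_ereal (h y))" "(z, real_of_ereal (h z))" "1 - s" s] s
    by simp
  then show ?thesis unfolding E_def by simp
qed

context bspace begin

lemma bnorm_pow_deriv:
  "((\<lambda>s. bnorm B (d + s *\<^sub>R w) ^ Suc (Suc n)) has_real_derivative
      real (Suc (Suc n)) * bnorm B d ^ n * (B d \<bullet> w)) (at 0)"
proof (cases "d = 0")
  case False
  define a where "a = B d \<bullet> w"
  define b where "b = B w \<bullet> w"
  define r where "r = bnorm B d"
  have r: "r > 0" unfolding r_def using bnorm_pos[OF False] .
  define Q where "Q s = r\<^sup>2 + 2 * s * a + s\<^sup>2 * b" for s
  have Qe: "bnorm B (d + s *\<^sub>R w) = sqrt (Q s)" for s
  proof -
    have "B (d + s *\<^sub>R w) \<bullet> (d + s *\<^sub>R w) = Q s"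
      unfolding Q_def a_def b_def r_def bnorm_sq
      using bsym[of w d] by (simp add: Badd Bscale inner_add_left inner_add_right power2_eq_square algebra_simps)
    then show ?thesis unfolding bnorm_def by simp
  qed
  have Q0: "Q 0 = r\<^sup>2" unfolding Q_def by simp
  have dQ: "(Q has_real_derivative 2 * a) (at 0)"
  proof -
    have "(Q has_real_derivative 0 + 2 * 1 * a + (2 * 0 * 1) * b) (at 0)"
      unfolding Q_def[abs_def] by (auto intro!: derivative_eq_intros)
    then show ?thesis by simp
  qed
  have dS: "((\<lambda>s. sqrt (Q s)) has_real_derivative inverse (sqrt (Q 0)) / 2 * (2 * a)) (at 0)"
    by (rule DERIV_chain2[OF DERIV_real_sqrt dQ]) (use r in \<open>simp add: Q0\<close>)
  have dP: "((\<lambda>s. sqrt (Q s) ^ Suc (Suc n)) has_real_derivative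
      real (Suc (Suc n)) * ((inverse (sqrt (Q 0)) / 2 * (2 * a)) * sqrt (Q 0) ^ (Suc (Suc n) - Suc 0))) (at 0)"
    by (rule DERIV_power[OF dS])
  have "real (Suc (Suc n)) * ((inverse (sqrt (Q 0)) / 2 * (2 * a)) * sqrt (Q 0) ^ (Suc (Suc n) - Suc 0))
      = real (Suc (Suc n)) * r ^ n * a"
  proof -
    have sq: "sqrt (Q 0) = r" using r by (simp add: Q0)
    have "inverse r / 2 * (2 * a) * r ^ Suc n = a * r ^ n" using r by (simp add: field_simps)
    then show ?thesis unfolding sq by simp
  qed
  then have "((\<lambda>s. sqrt (Q s) ^ Suc (Suc n)) has_real_derivative real (Suc (Suc n)) * r ^ n * a) (at 0)"
    using dP by (simp only:)
  moreover have "(\<lambda>s. bnorm B (d + s *\<^sub>R w) ^ Suc (Suc n)) = (\<lambda>s. sqrt (Q s) ^ Suc (Suc n))"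
    by (simp only: Qe)
  ultimately show ?thesis unfolding r_def a_def by (simp only:)
next
  case True
  define K where "K = bnorm B w ^ Suc (Suc n)"
  have fe: "bnorm B (d + s *\<^sub>R w) ^ Suc (Suc n) = \<bar>s\<bar> ^ Suc (Suc n) * K" for s
    unfolding True K_def by (simp add: bnorm_scale power_mult_distrib)
  have "((\<lambda>s. \<bar>s\<bar> ^ Suc (Suc n) * K) has_real_derivative 0) (at 0)"
    unfolding has_field_derivative_iff
  proof -
    have ab: "((\<lambda>s::real. \<bar>s\<bar>) \<longlongrightarrow> 0) (at 0)"
      using tendsto_rabs[OF tendsto_ident_at[of "0::real" UNIV]] by simp
    have "((\<lambda>s. \<bar>s\<bar> * (\<bar>s\<bar> ^ n * K)) \<longlongrightarrow> 0 * (0 ^ n * K)) (at 0)"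
      by (intro tendsto_intros ab)
    then have lim: "((\<lambda>s. \<bar>s\<bar> * (\<bar>s\<bar> ^ n * K)) \<longlongrightarrow> 0) (at 0)" by simp
    show "((\<lambda>y. (\<bar>y\<bar> ^ Suc (Suc n) * K - \<bar>0\<bar> ^ Suc (Suc n) * K) / (y - 0)) \<longlongrightarrow> 0) (at 0)"
    proof (rule tendsto_norm_zero_cancel)
      have "((\<lambda>y. norm ((\<bar>y\<bar> ^ Suc (Suc n) * K - \<bar>0\<bar> ^ Suc (Suc n) * K) / (y - 0))) \<longlongrightarrow> 0) (at 0)
          \<longleftrightarrow> ((\<lambda>s. \<bar>s\<bar> * (\<bar>s\<bar> ^ n * K)) \<longlongrightarrow> 0) (at 0)"
      proof (rule tendsto_cong)
        show "\<forall>\<^sub>F y in at 0. norm ((\<bar>y\<bar> ^ Suc (Suc n) * K - \<bar>0\<bar> ^ Suc (Suc n) * K) / (y - 0)) = \<bar>y\<bar> * (\<bar>y\<bar> ^ n * K)"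
          unfolding eventually_at_filter
        proof (intro always_eventually allI impI)
          fix y :: real assume "y \<noteq> 0"
          have K0: "K \<ge> 0" unfolding K_def using bnorm_nonneg by simp
          show "norm ((\<bar>y\<bar> ^ Suc (Suc n) * K - \<bar>0\<bar> ^ Suc (Suc n) * K) / (y - 0)) = \<bar>y\<bar> * (\<bar>y\<bar> ^ n * K)"
          proof -
            have "(\<bar>y\<bar> ^ Suc (Suc n) * K - \<bar>0\<bar> ^ Suc (Suc n) * K) / (y - 0) = (\<bar>y\<bar> ^ Suc (Suc n) * K) / y"
              by simp
            also have "norm \<dots> = (\<bar>y\<bar> ^ Suc (Suc n) * K) / \<bar>y\<bar>" using K0 by (simp add: abs_mult)
            also have "\<dots> = \<bar>y\<bar> * (\<bar>y\<bar> ^ n * K)" using \<open>y \<noteq> 0\<close> by (simp add: power_Suc)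
            finally show ?thesis .
          qed
        qed
      qed
      then show "((\<lambda>y. norm ((\<bar>y\<bar> ^ Suc (Suc n) * K - \<bar>0\<bar> ^ Suc (Suc n) * K) / (y - 0))) \<longlongrightarrow> 0) (at 0)"
        using lim by simp
    qed
  qed
  then show ?thesis unfolding fe using True by (simp add: B0)
qed

end

locale setting = bspace B for B :: "'a::euclidean_space \<Rightarrow> 'a" +
  fixes f :: "'a \<Rightarrow> real" and h :: "'a \<Rightarrow> ereal" and U :: "'a set"
    and p :: nat and L H \<sigma> q :: real and x :: "nat \<Rightarrow> 'a"
  assumes p2: "p \<ge> 2" and h_proper: "proper_fun h" and h_convex: "convex_fun h"
    and U_open: "open U" and domU: "edom h \<subseteq> U" and f_convex: "convex_on U f"
    and f_diff: "ktimes_differentiable_on p f U" and L_pos: "0 < L"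
    and f_lip: "\<And>y z. y \<in> edom h \<Longrightarrow> z \<in> edom h \<Longrightarrow>
                  tnorm B p (\<lambda>us. kderiv p f y us - kderiv p f z us) \<le> L * bnorm B (y - z)"
    and H_ge: "H \<ge> real p * L"
    and q2: "q \<ge> 2" and \<sigma>_pos: "\<sigma> > 0"
    and unif_conv: "\<And>y z Gy Gz. y \<in> edom h \<Longrightarrow> z \<in> edom h \<Longrightarrow>
                  Gy \<in> subdiff (compfun f h) y \<Longrightarrow> Gz \<in> subdiff (compfun f h) z \<Longrightarrow>
                  (Gy - Gz) \<bullet> (y - z) \<ge> \<sigma> * bnorm B (y - z) powr q"
    and x0: "x 0 \<in> edom h"
    and step: "\<And>k y. tmodel B p H f h (x k) (x (Suc k)) \<le> tmodel B p H f h (x k) y"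
begin

lemma hfin: "z \<in> edom h \<Longrightarrow> h z = ereal (real_of_ereal (h z))"
  using finite_ereal[OF h_proper] unfolding edom_def by simp

lemma edom_Suc: "x (Suc k) \<in> edom h"
proof -
  have h0: "h (x 0) = ereal (real_of_ereal (h (x 0)))" using hfin x0 .
  have "tmodel B p H f h (x k) (x 0) < \<infinity>" unfolding tmodel_def by (subst h0) simp
  then have lt: "tmodel B p H f h (x k) (x (Suc k)) < \<infinity>" using step[of k "x 0"] by (meson le_less_trans)
  show ?thesis
  proof (rule ccontr)
    assume "x (Suc k) \<notin> edom h"
    then have "h (x (Suc k)) = \<infinity>" unfolding edom_def by simp
    then show False using lt unfolding tmodel_def by simp
  qed
qed

lemma edom_x: "x k \<in> edom h"
  by (cases k) (use x0 edom_Suc in auto)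

lemma inU: "z \<in> edom h \<Longrightarrow> z \<in> U" using domU by auto

lemma seg_edom:
  assumes a: "a \<in> edom h" and b: "b \<in> edom h" and t: "0 \<le> t" "t \<le> 1"
  shows "a + t *\<^sub>R (b - a) \<in> edom h"
proof -
  have "h ((1 - t) *\<^sub>R a + t *\<^sub>R b) \<le> ereal ((1 - t) * real_of_ereal (h a) + t * real_of_ereal (h b))"
    by (rule convex_h[OF h_convex h_proper]) (use a b t in \<open>auto simp: edom_def\<close>)
  also have "\<dots> < \<infinity>" by simp
  finally have "h ((1 - t) *\<^sub>R a + t *\<^sub>R b) < \<infinity>" .
  moreover have "(1 - t) *\<^sub>R a + t *\<^sub>R b = a + t *\<^sub>R (b - a)" by (simp add: algebra_simps)
  ultimately show ?thesis unfolding edom_def by simp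
qed

lemma kml: "z \<in> U \<Longrightarrow> k \<le> p \<Longrightarrow> mlin k (kderiv k f z)"
  using kd_mlin[OF U_open f_diff] by blast

lemma ksym: "z \<in> U \<Longrightarrow> k \<le> p \<Longrightarrow> msym k (kderiv k f z)"
  using kd_sym[OF U_open f_diff] by blast

lemma f_has_deriv: "z \<in> U \<Longrightarrow> (f has_derivative (\<lambda>v. kderiv 1 f z [v])) (at z)"
  using kd_has_deriv[OF f_diff, of 0 z "[]"] p2 by simp

lemma grad_inner: "z \<in> U \<Longrightarrow> grad f z \<bullet> v = kderiv 1 f z [v]"
proof -
  assume z: "z \<in> U"
  have fd: "(f has_derivative (\<lambda>v. kderiv 1 f z [v])) (at z)" using f_has_deriv[OF z] .
  have "frechet_derivative f (at z) = (\<lambda>v. kderiv 1 f z [v])"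
    using frechet_derivative_at[OF fd] by simp
  moreover have "linear (\<lambda>v. kderiv 1 f z [v])"
    using has_derivative_bounded_linear[OF fd] bounded_linear.linear by blast
  ultimately show ?thesis unfolding grad_def using dualvec_inner by simp
qed

lemma tg_inner:
  assumes a: "a \<in> U"
  shows "taylor_grad p f a b \<bullet> v = (\<Sum>j<p. kderiv (Suc j) f a (replicate j (b - a) @ [v]) / fact j)"
proof -
  define R where "R k = replicate (k - 1) (b - a)" for k
  have li: "linear (\<lambda>v. kderiv k f a (v # R k) / fact (k - 1))" if k: "k \<in> {1..p}" for k
  proof -
    have ml: "mlin k (kderiv k f a)" using kml[OF a, of k] k by simp
    have "linear (\<lambda>v. kderiv k f a ([] @ v # R k))"
      by (rule ml[unfolded mlin_def, rule_format]) (use k in \<open>simp add: R_def\<close>)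
    then have l: "linear (\<lambda>v. kderiv k f a (v # R k))" by simp
    show ?thesis
      by (rule linearI) (simp_all add: linear_add[OF l] linear_scale[OF l] add_divide_distrib)
  qed
  have "linear (\<lambda>v. \<Sum>k=1..p. kderiv k f a (v # R k) / fact (k - 1))"
    by (rule linear_compose_sum) (use li in blast)
  then have "taylor_grad p f a b \<bullet> v = (\<Sum>k=1..p. kderiv k f a (v # R k) / fact (k - 1))"
    unfolding taylor_grad_def R_def by (rule dualvec_inner)
  also have "\<dots> = (\<Sum>j<p. kderiv (Suc j) f a (v # R (Suc j)) / fact j)"
    using sum_bounds_lt_plus1[of "\<lambda>k. kderiv k f a (v # R k) / fact (k - 1)" p] by simp
  also have "\<dots> = (\<Sum>j<p. kderiv (Suc j) f a (replicate j (b - a) @ [v]) / fact j)"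
  proof (rule sum.cong[OF refl])
    fix j assume "j \<in> {..<p}"
    then have ms: "msym (Suc j) (kderiv (Suc j) f a)" using ksym[OF a, of "Suc j"] by simp
    have "kderiv (Suc j) f a (replicate j (b - a) @ [v]) = kderiv (Suc j) f a (v # R (Suc j))"
      by (rule msymD[OF ms]) (simp_all add: R_def)
    then show "kderiv (Suc j) f a (v # R (Suc j)) / fact j = kderiv (Suc j) f a (replicate j (b - a) @ [v]) / fact j"
      by simp
  qed
  finally show ?thesis .
qed

lemma rem_bound:
  assumes a: "a \<in> edom h" and b: "b \<in> edom h"
  shows "\<bar>grad f b \<bullet> v - taylor_grad p f a b \<bullet> v\<bar> \<le> L * bnorm B (b - a) ^ p * bnorm B v / fact p"
proof -
  define d where "d = b - a"
  define C where "C = L * bnorm B d ^ p * bnorm B v"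
  have aU: "a \<in> U" and bU: "b \<in> U" using a b inU by auto
  have seg: "a + t *\<^sub>R d \<in> U" if "0 \<le> t" "t \<le> 1" for t
    using seg_edom[OF a b that] inU unfolding d_def by auto
  have bnd: "\<bar>kderiv p f (a + t *\<^sub>R d) (replicate (p-1) d @ [v]) - kderiv p f a (replicate (p-1) d @ [v])\<bar> \<le> C * t"
    if t: "0 \<le> t" "t \<le> 1" for t
  proof -
    define A where "A us = kderiv p f (a + t *\<^sub>R d) us - kderiv p f a us" for us
    have ae: "a + t *\<^sub>R d \<in> edom h" using seg_edom[OF a b t] unfolding d_def .
    have mlA: "mlin p A" unfolding A_def[abs_def]
      by (rule mlin_diff) (use kml seg[OF t] aU in auto)
    have msA: "msym p A" unfolding A_def[abs_def]
      by (rule msym_diff) (use ksym seg[OF t] aU in auto)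
    have p1: "p \<ge> 1" using p2 by simp
    have Asw: "A (replicate (p-1) d @ [v]) = A (v # replicate (p-1) d)"
      by (rule msymD[OF msA]) (use p1 in auto)
    have tb: "\<And>u. \<bar>A (replicate p u)\<bar> \<le> tnorm B p A * bnorm B u ^ p" "tnorm B p A \<ge> 0"
      using tnorm_bound[OF mlA p1] by auto
    have "\<bar>A (v # replicate (p-1) d)\<bar> \<le> tnorm B p A * bnorm B v * bnorm B d ^ (p-1)"
      by (rule banach[OF mlA msA p2 tb(2) tb(1)])
    also have "tnorm B p A \<le> L * (t * bnorm B d)"
    proof -
      have "tnorm B p A \<le> L * bnorm B ((a + t *\<^sub>R d) - a)"
        unfolding A_def using f_lip[OF ae a] by simp
      then show ?thesis using t by (simp add: bnorm_scale)
    qed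
    then have "tnorm B p A * bnorm B v * bnorm B d ^ (p-1) \<le> L * (t * bnorm B d) * bnorm B v * bnorm B d ^ (p-1)"
      using bnorm_nonneg by (intro mult_right_mono) auto
    also have "\<dots> = C * t"
    proof -
      have "bnorm B d * bnorm B d ^ (p-1) = bnorm B d ^ p" using p1 by (simp add: power_eq_if)
      then show ?thesis unfolding C_def by (simp add: algebra_simps)
    qed
    finally show ?thesis using Asw unfolding A_def by simp
  qed
  have "\<bar>kderiv 1 f (a + d) [v] - (\<Sum>j<p. kderiv (Suc j) f a (replicate j d @ [v]) / fact j)\<bar> \<le> C / fact p"
    by (rule taylor_grad_bound[OF U_open f_diff _ seg bnd]) (use p2 in auto)
  moreover have "grad f b \<bullet> v = kderiv 1 f (a + d) [v]" using grad_inner[OF bU] unfolding d_def by simp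
  moreover have "taylor_grad p f a b \<bullet> v = (\<Sum>j<p. kderiv (Suc j) f a (replicate j d @ [v]) / fact j)"
    using tg_inner[OF aU, of b v] unfolding d_def .
  ultimately show ?thesis unfolding C_def d_def by (simp only:)
qed

end

context setting begin

lemma grad_ineq:
  assumes z0: "z0 \<in> edom h" and z: "z \<in> edom h"
  shows "f z \<ge> f z0 + grad f z0 \<bullet> (z - z0)"
proof -
  define w where "w = z - z0"
  have z0U: "z0 \<in> U" and zU: "z \<in> U" using z0 z inU by auto
  have fd: "(f has_derivative (\<lambda>v. kderiv 1 f z0 [v])) (at (z0 + 0 *\<^sub>R w))" using f_has_deriv[OF z0U] by simp
  have d1: "((\<lambda>s. f (z0 + s *\<^sub>R w)) has_real_derivative kderiv 1 f z0 [w]) (at 0)"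
    using line_deriv[OF fd] .
  have d2: "((\<lambda>s. - f (z0 + s *\<^sub>R w)) has_real_derivative - kderiv 1 f z0 [w]) (at 0)"
    using DERIV_minus[OF d1] .
  have "f z0 - f z \<le> - kderiv 1 f z0 [w]"
  proof (rule deriv_ge[OF d2])
    fix s :: real assume s: "0 < s" "s \<le> 1"
    have "f ((1 - s) *\<^sub>R z0 + s *\<^sub>R z) \<le> (1 - s) * f z0 + s * f z"
      by (rule convex_onD[OF f_convex]) (use s z0U zU in auto)
    moreover have "(1 - s) *\<^sub>R z0 + s *\<^sub>R z = z0 + s *\<^sub>R w" unfolding w_def by (simp add: algebra_simps)
    ultimately show "s * (f z0 - f z) \<le> - f (z0 + s *\<^sub>R w) - - f (z0 + 0 *\<^sub>R w)"
      by (simp add: algebra_simps)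
  qed
  then show ?thesis using grad_inner[OF z0U, of w] unfolding w_def by simp
qed

lemma subdiff_comp:
  assumes z0: "z0 \<in> edom h" and g: "g \<in> subdiff h z0"
  shows "grad f z0 + g \<in> subdiff (compfun f h) z0"
proof -
  have h0: "h z0 = ereal (real_of_ereal (h z0))" using hfin[OF z0] .
  have hne: "h z0 \<noteq> \<infinity>" using z0 unfolding edom_def by simp
  have "compfun f h z0 = ereal (f z0 + real_of_ereal (h z0))"
    unfolding compfun_def using hne by (subst h0) simp
  note c0 = this
  show ?thesis unfolding subdiff_def
  proof (intro CollectI conjI allI)
    show "compfun f h z0 < \<infinity>" unfolding c0 by simp
    fix z
    show "compfun f h z0 + ereal ((grad f z0 + g) \<bullet> (z - z0)) \<le> compfun f h z"
    proof (cases "h z = \<infinity>")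
      case True then show ?thesis unfolding compfun_def by simp
    next
      case False
      then have ze: "z \<in> edom h" unfolding edom_def by (simp add: less_top)
      have h1: "h z = ereal (real_of_ereal (h z))" using hfin[OF ze] .
      have "h z0 + ereal (g \<bullet> (z - z0)) \<le> h z" using g unfolding subdiff_def by blast
      then have hg: "real_of_ereal (h z0) + g \<bullet> (z - z0) \<le> real_of_ereal (h z)"
        by (subst (asm) h0, subst (asm) h1) simp
      have fg: "f z \<ge> f z0 + grad f z0 \<bullet> (z - z0)" using grad_ineq[OF z0 ze] .
      have "compfun f h z = ereal (f z + real_of_ereal (h z))"
        unfolding compfun_def using False by (subst h1) simp
      then show ?thesis unfolding c0 using hg fg by (simp add: inner_add_left)
    qed
  qed
qed

lemma tg_inner0:
  assumes a: "a \<in> U"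
  shows "taylor_grad p f a b \<bullet> v = (\<Sum>k=1..p. kderiv k f a (v # replicate (k - 1) (b - a)) / fact (k - 1))"
proof -
  define R where "R k = replicate (k - 1) (b - a)" for k
  have li: "linear (\<lambda>v. kderiv k f a (v # R k) / fact (k - 1))" if k: "k \<in> {1..p}" for k
  proof -
    have ml: "mlin k (kderiv k f a)" using kml[OF a, of k] k by simp
    have "linear (\<lambda>v. kderiv k f a ([] @ v # R k))"
      by (rule ml[unfolded mlin_def, rule_format]) (use k in \<open>simp add: R_def\<close>)
    then have l: "linear (\<lambda>v. kderiv k f a (v # R k))" by simp
    show ?thesis
      by (rule linearI) (simp_all add: linear_add[OF l] linear_scale[OF l] add_divide_distrib)
  qed
  have "linear (\<lambda>v. \<Sum>k=1..p. kderiv k f a (v # R k) / fact (k - 1))"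
    by (rule linear_compose_sum) (use li in blast)
  then show ?thesis unfolding taylor_grad_def R_def by (rule dualvec_inner)
qed

lemma opt:
  fixes k :: nat
  defines "a \<equiv> x k" and "y \<equiv> x (Suc k)"
  shows "- (taylor_grad p f a y + (H / fact p * bnorm B (y - a) ^ (p - 1)) *\<^sub>R B (y - a)) \<in> subdiff h y"
proof -
  define d where "d = y - a"
  define c where "c = H / fact p * bnorm B d ^ (p - 1)"
  define G where "G = taylor_grad p f a y + c *\<^sub>R B d"
  have ae: "a \<in> edom h" and ye: "y \<in> edom h" unfolding a_def y_def using edom_x by auto
  have aU: "a \<in> U" using ae inU by auto
  define m where "m u = taylor p f a u + H / fact (p + 1) * bnorm B (u - a) ^ (p + 1)" for u
  have tm: "tmodel B p H f h a u = ereal (m u) + h u" for u unfolding tmodel_def m_def ..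
  have hy: "h y = ereal (real_of_ereal (h y))" using hfin[OF ye] .
  have key: "h y + ereal ((- G) \<bullet> (z - y)) \<le> h z" for z
  proof (cases "h z = \<infinity>")
    case True then show ?thesis by simp
  next
    case False
    then have ze: "z \<in> edom h" unfolding edom_def by (simp add: less_top)
    have hz: "h z = ereal (real_of_ereal (h z))" using hfin[OF ze] .
    define w where "w = z - y"
    define \<phi> where "\<phi> s = m (y + s *\<^sub>R w)" for s
    have poly_ex: "\<forall>j\<in>{1..p}. \<exists>P. (\<forall>t. kderiv j f a (replicate j (d + t *\<^sub>R w)) = poly P t)
        \<and> coeff P 1 = of_nat j * kderiv j f a (w # replicate (j - 1) d)"
    proof
      fix j assume j: "j \<in> {1..p}"
      have ml: "mlin j (kderiv j f a)" and ms: "msym j (kderiv j f a)"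
        using kml[OF aU, of j] ksym[OF aU, of j] j by auto
      show "\<exists>P. (\<forall>t. kderiv j f a (replicate j (d + t *\<^sub>R w)) = poly P t)
        \<and> coeff P 1 = of_nat j * kderiv j f a (w # replicate (j - 1) d)"
        using mpoly_expand0[OF ml ms, of d w] by blast
    qed
    from bchoice[OF poly_ex] obtain PP where PP: "\<And>j. j \<in> {1..p} \<Longrightarrow> (\<forall>t. kderiv j f a (replicate j (d + t *\<^sub>R w)) = poly (PP j) t)"
      "\<And>j. j \<in> {1..p} \<Longrightarrow> coeff (PP j) 1 = of_nat j * kderiv j f a (w # replicate (j - 1) d)"
      by blast
    have phi_eq: "\<phi> s = f a + (\<Sum>j=1..p. poly (PP j) s / fact j) + H / fact (p + 1) * bnorm B (d + s *\<^sub>R w) ^ Suc (Suc (p - 1))" for s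
    proof -
      have e1: "y + s *\<^sub>R w - a = d + s *\<^sub>R w" unfolding d_def by (simp add: algebra_simps)
      have e2: "(\<Sum>j=1..p. kderiv j f a (replicate j (d + s *\<^sub>R w)) / fact j) = (\<Sum>j=1..p. poly (PP j) s / fact j)"
        using PP(1) by (intro sum.cong) auto
      have e3: "Suc (Suc (p - 1)) = p + 1" using p2 by simp
      show ?thesis unfolding \<phi>_def m_def taylor_def e1 e2 e3 by simp
    qed
    have dT: "((\<lambda>s. \<Sum>j=1..p. poly (PP j) s / fact j) has_real_derivative (\<Sum>j=1..p. poly (pderiv (PP j)) 0 / fact j)) (at 0)"
      by (intro DERIV_sum DERIV_cdivide poly_DERIV)
    have dN: "((\<lambda>s. H / fact (p + 1) * bnorm B (d + s *\<^sub>R w) ^ Suc (Suc (p - 1))) has_real_derivative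
        H / fact (p + 1) * (real (Suc (Suc (p - 1))) * bnorm B d ^ (p - 1) * (B d \<bullet> w))) (at 0)"
      by (intro DERIV_cmult bnorm_pow_deriv)
    have dphi: "(\<phi> has_real_derivative (\<Sum>j=1..p. poly (pderiv (PP j)) 0 / fact j) +
        H / fact (p + 1) * (real (Suc (Suc (p - 1))) * bnorm B d ^ (p - 1) * (B d \<bullet> w))) (at 0)"
    proof -
      have "((\<lambda>s. f a + (\<Sum>j=1..p. poly (PP j) s / fact j)) has_real_derivative 0 + (\<Sum>j=1..p. poly (pderiv (PP j)) 0 / fact j)) (at 0)"
        by (rule DERIV_add[OF DERIV_const dT])
      from DERIV_add[OF this dN] show ?thesis unfolding phi_eq[abs_def] by simp
    qed
    have Dval: "(\<Sum>j=1..p. poly (pderiv (PP j)) 0 / fact j) +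
        H / fact (p + 1) * (real (Suc (Suc (p - 1))) * bnorm B d ^ (p - 1) * (B d \<bullet> w)) = G \<bullet> w"
    proof -
      have "(\<Sum>j=1..p. poly (pderiv (PP j)) 0 / fact j) = (\<Sum>j=1..p. kderiv j f a (w # replicate (j - 1) d) / fact (j - 1))"
      proof (rule sum.cong[OF refl])
        fix j assume j: "j \<in> {1..p}"
        have "poly (pderiv (PP j)) 0 = coeff (PP j) 1" by (simp add: poly_0_coeff_0 coeff_pderiv)
        also have "\<dots> = of_nat j * kderiv j f a (w # replicate (j - 1) d)" using PP(2)[OF j] .
        finally have e: "poly (pderiv (PP j)) 0 = of_nat j * kderiv j f a (w # replicate (j - 1) d)" .
        have fj: "fact j = of_nat j * (fact (j - 1) :: real)" using j by (simp add: fact_reduce)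
        show "poly (pderiv (PP j)) 0 / fact j = kderiv j f a (w # replicate (j - 1) d) / fact (j - 1)"
          unfolding e fj using j by simp
      qed
      also have "\<dots> = taylor_grad p f a y \<bullet> w" using tg_inner0[OF aU, of y w] unfolding d_def by simp
      finally have t1: "(\<Sum>j=1..p. poly (pderiv (PP j)) 0 / fact j) = taylor_grad p f a y \<bullet> w" .
      have "H / fact (p + 1) * (real (Suc (Suc (p - 1))) * bnorm B d ^ (p - 1) * (B d \<bullet> w)) = (c *\<^sub>R B d) \<bullet> w"
      proof -
        have "Suc (Suc (p - 1)) = Suc p" using p2 by simp
        then have "H / fact (p + 1) * (real (Suc (Suc (p - 1))) * bnorm B d ^ (p - 1) * (B d \<bullet> w))
            = H / fact p * bnorm B d ^ (p - 1) * (B d \<bullet> w)"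
          by (simp add: fact_Suc del: of_nat_Suc)
        then show ?thesis unfolding c_def by simp
      qed
      then show ?thesis using t1 unfolding G_def by (simp add: inner_add_left)
    qed
    have "real_of_ereal (h y) - real_of_ereal (h z) \<le> G \<bullet> w"
    proof (rule deriv_ge[OF dphi[unfolded Dval]])
      fix s :: real assume s: "0 < s" "s \<le> 1"
      define zs where "zs = y + s *\<^sub>R w"
      have zse: "zs \<in> edom h" unfolding zs_def w_def using seg_edom[OF ye ze] s by simp
      have hzs: "h zs = ereal (real_of_ereal (h zs))" using hfin[OF zse] .
      have "tmodel B p H f h a y \<le> tmodel B p H f h a zs" unfolding a_def y_def by (rule step)
      then have st: "m y + real_of_ereal (h y) \<le> m zs + real_of_ereal (h zs)"
        unfolding tm by (subst (asm) hy, subst (asm) hzs) simp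
      have "h ((1 - s) *\<^sub>R y + s *\<^sub>R z) \<le> ereal ((1 - s) * real_of_ereal (h y) + s * real_of_ereal (h z))"
        by (rule convex_h[OF h_convex h_proper]) (use ye ze s in \<open>auto simp: edom_def\<close>)
      moreover have "(1 - s) *\<^sub>R y + s *\<^sub>R z = zs" unfolding zs_def w_def by (simp add: algebra_simps)
      ultimately have "h zs \<le> ereal ((1 - s) * real_of_ereal (h y) + s * real_of_ereal (h z))"
        by simp
      then have "real_of_ereal (h zs) \<le> (1 - s) * real_of_ereal (h y) + s * real_of_ereal (h z)"
        by (subst (asm) hzs) simp
      then show "s * (real_of_ereal (h y) - real_of_ereal (h z)) \<le> \<phi> s - \<phi> 0"
        using st unfolding \<phi>_def zs_def by (simp add: algebra_simps)
    qed
    then show ?thesis unfolding w_def by (subst hy, subst hz) (simp add: inner_minus_left)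
  qed
  have "- G \<in> subdiff h y" unfolding subdiff_def using key ye by (simp add: edom_def)
  then show ?thesis unfolding G_def c_def d_def .
qed

end

context setting begin

lemma main:
  "eta B f h (x (Suc k)) \<le>
           ereal (dnorm B (grad f (x (Suc k)) - taylor_grad p f (x k) (x (Suc k))
              - (H / fact p * bnorm B (x (Suc k) - x k) ^ (p - 1)) *\<^sub>R B (x (Suc k) - x k)))
         \<and> (eta B f h (x k) \<noteq> \<infinity> \<longrightarrow>
            dnorm B (grad f (x (Suc k)) - taylor_grad p f (x k) (x (Suc k))
              - (H / fact p * bnorm B (x (Suc k) - x k) ^ (p - 1)) *\<^sub>R B (x (Suc k) - x k))
            \<le> (L + H) / fact p * (real_of_ereal (eta B f h (x k)) / \<sigma>) powr (real p / (q - 1)))"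
proof -
  define a where "a = x k"
  define y where "y = x (Suc k)"
  define d where "d = y - a"
  define r where "r = bnorm B d"
  define c where "c = H / fact p * r ^ (p - 1)"
  define TG where "TG = taylor_grad p f a y"
  define Fp where "Fp = grad f y - TG - c *\<^sub>R B d"
  define gs where "gs = - (TG + c *\<^sub>R B d)"
  have ae: "a \<in> edom h" and ye: "y \<in> edom h" unfolding a_def y_def using edom_x by auto
  have r0: "r \<ge> 0" unfolding r_def by (rule bnorm_nonneg)
  have p1: "p \<ge> 1" using p2 by simp
  have Lp: "L > 0" using L_pos .
  have HL: "L \<le> H"
  proof -
    have "L \<le> real p * L" using p1 Lp by (simp add: mult_le_cancel_right1)
    then show ?thesis using H_ge by simp
  qed
  have fp: "fact p > (0::real)" by simp
  have gs_sub: "gs \<in> subdiff h y"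
    using opt[of k] unfolding gs_def TG_def c_def r_def d_def a_def y_def by simp
  have Fp_eq: "Fp = grad f y + gs" unfolding Fp_def gs_def by (simp add: algebra_simps)
  have conj1: "eta B f h y \<le> ereal (dnorm B Fp)"
  proof -
    have ne: "subdiff h y \<noteq> {}" using gs_sub by auto
    have "Inf {dnorm B (grad f y + g) | g. g \<in> subdiff h y} \<le> dnorm B Fp"
    proof (rule cInf_lower)
      show "dnorm B Fp \<in> {dnorm B (grad f y + g) | g. g \<in> subdiff h y}" using Fp_eq gs_sub by auto
      show "bdd_below {dnorm B (grad f y + g) | g. g \<in> subdiff h y}"
        by (rule bdd_belowI[of _ 0]) (auto simp: dnorm_nonneg)
    qed
    then show ?thesis unfolding eta_def using ne by simp
  qed
  have Rb: "(grad f y - TG) \<bullet> v \<le> L * r ^ p * bnorm B v / fact p" for v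
    using rem_bound[OF ae ye, of v] unfolding TG_def r_def d_def by (simp add: inner_diff_left)
  have Fd: "Fp \<bullet> d \<le> 0"
  proof -
    have "Fp \<bullet> d = (grad f y - TG) \<bullet> d - c * (B d \<bullet> d)" unfolding Fp_def by (simp add: inner_diff_left)
    also have "B d \<bullet> d = r ^ 2" unfolding r_def by (simp add: bnorm_sq)
    also have "(grad f y - TG) \<bullet> d \<le> L * r ^ p * r / fact p" using Rb[of d] unfolding r_def by simp
    then have "(grad f y - TG) \<bullet> d - c * r ^ 2 \<le> L * r ^ p * r / fact p - c * r ^ 2" by simp
    also have "L * r ^ p * r / fact p - c * r ^ 2 = (L - H) * (r ^ (p - 1) * r ^ 2) / fact p"
    proof -
      have "r ^ p * r = r ^ (p - 1) * r ^ 2" using p1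
        by (metis Suc_diff_le diff_Suc_1 power_Suc2 power2_eq_square mult.assoc)
      then show ?thesis unfolding c_def by (simp add: field_simps)
    qed
    also have "\<dots> \<le> 0" using HL r0 by (intro divide_nonpos_pos mult_nonpos_nonneg) auto
    finally show ?thesis .
  qed
  have Fn: "dnorm B Fp \<le> (L + H) / fact p * r ^ p"
  proof (rule dnorm_le)
    show "0 \<le> (L + H) / fact p * r ^ p" using Lp HL r0 by simp
    fix v
    have "Fp \<bullet> v = (grad f y - TG) \<bullet> v - c * (B d \<bullet> v)" unfolding Fp_def by (simp add: inner_diff_left)
    also have "\<dots> \<le> L * r ^ p * bnorm B v / fact p + c * (r * bnorm B v)"
    proof -
      have "- (B d \<bullet> v) \<le> r * bnorm B v" using bcs[of d v] unfolding r_def by simp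
      moreover have "c \<ge> 0" unfolding c_def using HL Lp r0 by simp
      ultimately have "- c * (B d \<bullet> v) \<le> c * (r * bnorm B v)"
        by (metis mult_left_mono mult_minus_right minus_mult_left)
      then show ?thesis using Rb[of v] by simp
    qed
    also have "\<dots> = (L + H) / fact p * r ^ p * bnorm B v"
    proof -
      have "r ^ (p - 1) * r = r ^ p" using p1 by (metis Suc_diff_le diff_Suc_1 power_Suc2)
      then show ?thesis unfolding c_def by (simp add: field_simps)
    qed
    finally show "Fp \<bullet> v \<le> (L + H) / fact p * r ^ p * bnorm B v" .
  qed
  have conj2: "eta B f h a \<noteq> \<infinity> \<Longrightarrow> dnorm B Fp \<le> (L + H) / fact p * (real_of_ereal (eta B f h a) / \<sigma>) powr (real p / (q - 1))"
  proof -
    assume en: "eta B f h a \<noteq> \<infinity>"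
    then have ne: "subdiff h a \<noteq> {}" unfolding eta_def by auto
    define S where "S = {dnorm B (grad f a + g) | g. g \<in> subdiff h a}"
    define \<eta> where "\<eta> = Inf S"
    have eta_eq: "real_of_ereal (eta B f h a) = \<eta>" unfolding eta_def \<eta>_def S_def using ne by simp
    have Sne: "S \<noteq> {}" unfolding S_def using ne by auto
    have Fsub: "Fp \<in> subdiff (compfun f h) y" unfolding Fp_eq by (rule subdiff_comp[OF ye gs_sub])
    have ucb: "\<sigma> * r powr q \<le> dnorm B (grad f a + g0) * r" if g0: "g0 \<in> subdiff h a" for g0
    proof -
      define G0 where "G0 = grad f a + g0"
      have G0s: "G0 \<in> subdiff (compfun f h) a" unfolding G0_def by (rule subdiff_comp[OF ae g0])
      have "\<sigma> * bnorm B (a - y) powr q \<le> (G0 - Fp) \<bullet> (a - y)" by (rule unif_conv[OF ae ye G0s Fsub])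
      moreover have "bnorm B (a - y) = r" unfolding r_def d_def by (rule bnorm_minus_commute)
      moreover have "(G0 - Fp) \<bullet> (a - y) = G0 \<bullet> (a - y) + Fp \<bullet> d" unfolding d_def
        by (simp add: inner_diff_left inner_diff_right)
      moreover have "G0 \<bullet> (a - y) \<le> dnorm B G0 * r"
        using dual_cs[of G0 "a - y"] \<open>bnorm B (a - y) = r\<close> by simp
      ultimately have "\<sigma> * r powr q \<le> G0 \<bullet> (a - y) + Fp \<bullet> d" "G0 \<bullet> (a - y) \<le> dnorm B G0 * r"
        by auto
      then show ?thesis using Fd unfolding G0_def by linarith
    qed
    have RHS0: "0 \<le> (L + H) / fact p * (real_of_ereal (eta B f h a) / \<sigma>) powr (real p / (q - 1))"
      using Lp HL by simp
    show ?thesis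
    proof (cases "r = 0")
      case True
      then have "dnorm B Fp \<le> 0" using Fn p1 by (simp add: power_0_left)
      then show ?thesis using RHS0 by linarith
    next
      case False
      then have rp: "r > 0" using r0 by simp
      have q1: "q - 1 > 0" using q2 by simp
      have rq: "r powr q = r powr (q - 1) * r"
        using rp by (simp add: powr_diff)
      have lb: "\<sigma> * r powr (q - 1) \<le> s" if "s \<in> S" for s
      proof -
        obtain g0 where g0: "g0 \<in> subdiff h a" "s = dnorm B (grad f a + g0)" using \<open>s \<in> S\<close> unfolding S_def by auto
        have "\<sigma> * r powr (q - 1) * r \<le> s * r" using ucb[OF g0(1)] g0(2) rq by (simp add: mult.assoc)
        then show ?thesis using rp by simp
      qed
      have "\<sigma> * r powr (q - 1) \<le> \<eta>" unfolding \<eta>_def by (rule cInf_greatest[OF Sne lb])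
      then have A: "r powr (q - 1) \<le> \<eta> / \<sigma>" using \<sigma>_pos by (simp add: field_simps)
      have e0: "0 \<le> \<eta> / \<sigma>" using A rp by (meson order_trans powr_ge_zero)
      have "r = (r powr (q - 1)) powr (1 / (q - 1))" using rp q1 by (simp add: powr_powr)
      also have "\<dots> \<le> (\<eta> / \<sigma>) powr (1 / (q - 1))" using A q1 by (intro powr_mono2) auto
      finally have B1: "r \<le> (\<eta> / \<sigma>) powr (1 / (q - 1))" .
      have "r ^ p = r powr real p" using rp by (simp add: powr_realpow)
      also have "\<dots> \<le> ((\<eta> / \<sigma>) powr (1 / (q - 1))) powr real p" using B1 rp by (intro powr_mono2) auto
      also have "\<dots> = (\<eta> / \<sigma>) powr (real p / (q - 1))" by (simp add: powr_powr)
      finally have "r ^ p \<le> (\<eta> / \<sigma>) powr (real p / (q - 1))" .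
      then have "(L + H) / fact p * r ^ p \<le> (L + H) / fact p * (\<eta> / \<sigma>) powr (real p / (q - 1))"
        using Lp HL by (intro mult_left_mono) auto
      then show ?thesis using Fn eta_eq by simp
    qed
  qed
  show ?thesis using conj1 conj2 unfolding Fp_def TG_def c_def r_def d_def a_def y_def by blast
qed

end

theorem theorem2:
  fixes B :: "'a::euclidean_space \<Rightarrow> 'a"
    and f :: "'a \<Rightarrow> real" and h :: "'a \<Rightarrow> ereal"
    and U :: "'a set" and p :: nat and L H \<sigma> q :: real
    and x :: "nat \<Rightarrow> 'a"
  assumes B_lin: "linear B"
    and B_sa: "\<And>u v. B u \<bullet> v = u \<bullet> B v"
    and B_pd: "\<And>u. u \<noteq> 0 \<Longrightarrow> B u \<bullet> u > 0"
    and p2: "p \<ge> 2"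
    and h_proper: "proper_fun h" and h_closed: "closed_fun h" and h_convex: "convex_fun h"
    and U_open: "open U" and U_convex: "convex U" and domU: "edom h \<subseteq> U"
    and f_convex: "convex_on U f"
    and f_diff: "ktimes_differentiable_on p f U"
    and L_pos: "0 < L"
    and f_lip: "\<And>y z. y \<in> edom h \<Longrightarrow> z \<in> edom h \<Longrightarrow>
                  tnorm B p (\<lambda>us. kderiv p f y us - kderiv p f z us) \<le> L * bnorm B (y - z)"
    and H_ge: "H \<ge> real p * L"
    and q2: "q \<ge> 2" and \<sigma>_pos: "\<sigma> > 0"
    and unif_conv: "\<And>y z Gy Gz. y \<in> edom h \<Longrightarrow> z \<in> edom h \<Longrightarrow>
                  Gy \<in> subdiff (compfun f h) y \<Longrightarrow> Gz \<in> subdiff (compfun f h) z \<Longrightarrow>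
                  (Gy - Gz) \<bullet> (y - z) \<ge> \<sigma> * bnorm B (y - z) powr q"
    and x0: "x 0 \<in> edom h"
    and step: "\<And>k y. tmodel B p H f h (x k) (x (Suc k)) \<le> tmodel B p H f h (x k) y"
  shows "eta B f h (x (Suc k)) \<le>
           ereal (dnorm B (grad f (x (Suc k)) - taylor_grad p f (x k) (x (Suc k))
              - (H / fact p * bnorm B (x (Suc k) - x k) ^ (p - 1)) *\<^sub>R B (x (Suc k) - x k)))
         \<and> (eta B f h (x k) \<noteq> \<infinity> \<longrightarrow>
            dnorm B (grad f (x (Suc k)) - taylor_grad p f (x k) (x (Suc k))
              - (H / fact p * bnorm B (x (Suc k) - x k) ^ (p - 1)) *\<^sub>R B (x (Suc k) - x k))
            \<le> (L + H) / fact p * (real_of_ereal (eta B f h (x k)) / \<sigma>) powr (real p / (q - 1)))"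
proof -
  have bs: "bspace B" unfolding bspace_def using B_lin B_sa B_pd by blast
  have sa: "setting_axioms B f h U p L H \<sigma> q x" unfolding setting_axioms_def
    using p2 h_proper h_convex U_open domU f_convex f_diff L_pos f_lip H_ge q2 \<sigma>_pos unif_conv x0 step
    by blast
  interpret S: setting B f h U p L H \<sigma> q x by (rule setting.intro[OF bs sa])
  show ?thesis by (rule S.main)
qed

end
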